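(* A triangle $T\subset\mathbb{R}^2$ is simultaneously lattice reduced and lattice complete with respect to $\mathbb{Z}^2$ if and only if it is equivalent to a triangle of the form $$T_x=\mathrm{conv}\left\{\binom{-1}{-1},\binom{x}{1},\binom{1}{-x}\right\}$$ with $0\le x<1$.
   Context: Two polygons are equivalent if one is mapped to the other by a composition of translations, dilations $z\mapsto\lambda z$ ($\lambda>0$) and unimodular transformations $z\mapsto Uz$, $U\in\mathrm{GL}_2(\mathbb{Z})$. For a convex body $C\subset\mathbb{R}^2$ (compact convex, non-empty interior): $\mathrm{wdt}(C)=\min_{y\in\mathbb{Z}^2\setminus\{0\}}\max_{a,b\in C}y\cdot(a-b)$; a segment $[a,b]$ with $b-a$ parallel to a nonzero integer vector has lattice length $|b-a|/|v|$ where $v$ is the primitive integer vector that is a positive multiple of $b-a$; $\mathrm{diam}(C)$ is the maximum lattice length of such a segment in $C$. $C$ is lattice reduced if no convex body $C'\subsetneq C$ has $\mathrm{wdt}(C')=\mathrm{wdt}(C)$, and lattice complete if no convex body $C'\supsetneq C$ has $\mathrm{diam}(C')=\mathrm{diam}(C)$. *)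

theory Defs
  imports "HOL-Analysis.Analysis"
begin

definition int_vec :: "real \<times> real \<Rightarrow> bool" where
  "int_vec y \<longleftrightarrow> fst y \<in> \<int> \<and> snd y \<in> \<int>"

definition primitive_vec :: "real \<times> real \<Rightarrow> bool" where
  "primitive_vec v \<longleftrightarrow> int_vec v \<and> gcd \<lfloor>fst v\<rfloor> \<lfloor>snd v\<rfloor> = 1"

definition convex_body :: "(real \<times> real) set \<Rightarrow> bool" where
  "convex_body C \<longleftrightarrow> compact C \<and> convex C \<and> interior C \<noteq> {}"

definition width_dir :: "(real \<times> real) set \<Rightarrow> real \<times> real \<Rightarrow> real" where
  "width_dir C y = Sup {y \<bullet> (a - b) | a b. a \<in> C \<and> b \<in> C}"

definition lattice_width :: "(real \<times> real) set \<Rightarrow> real" where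
  "lattice_width C = Inf {width_dir C y | y. int_vec y \<and> y \<noteq> 0}"

text \<open>Lattice length of [a,b] with b - a = t v, v primitive, t \<ge> 0, is t;
  lattice diameter is the maximum of these over segments in C.\<close>
definition lattice_diam :: "(real \<times> real) set \<Rightarrow> real" where
  "lattice_diam C = Sup {t. \<exists>a b v. a \<in> C \<and> b \<in> C \<and> primitive_vec v \<and> t \<ge> 0 \<and> b - a = t *\<^sub>R v}"

definition lattice_reduced :: "(real \<times> real) set \<Rightarrow> bool" where
  "lattice_reduced C \<longleftrightarrow> convex_body C \<and>
     (\<forall>C'. convex_body C' \<and> C' \<subset> C \<longrightarrow> lattice_width C' \<noteq> lattice_width C)"

definition lattice_complete :: "(real \<times> real) set \<Rightarrow> bool" where
  "lattice_complete C \<longleftrightarrow> convex_body C \<and>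
     (\<forall>C'. convex_body C' \<and> C \<subset> C' \<longrightarrow> lattice_diam C' \<noteq> lattice_diam C)"

definition triangle :: "(real \<times> real) set \<Rightarrow> bool" where
  "triangle T \<longleftrightarrow> (\<exists>a b c. \<not> collinear {a, b, c} \<and> T = convex hull {a, b, c})"

definition unimod_map :: "int \<Rightarrow> int \<Rightarrow> int \<Rightarrow> int \<Rightarrow> real \<times> real \<Rightarrow> real \<times> real" where
  "unimod_map a b c d z = (of_int a * fst z + of_int b * snd z, of_int c * fst z + of_int d * snd z)"

text \<open>Compositions of translations, positive dilations and unimodular maps are
  exactly the maps z \<mapsto> \<lambda> U z + t.\<close>
definition lattice_equiv :: "(real \<times> real) set \<Rightarrow> (real \<times> real) set \<Rightarrow> bool" where
  "lattice_equiv P Q \<longleftrightarrow> (\<exists>(r::real) a b c d t. r > 0 \<and> \<bar>a * d - b * c\<bar> = 1 \<and>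
      Q = (\<lambda>z. r *\<^sub>R unimod_map a b c d z + t) ` P)"

definition T_tri :: "real \<Rightarrow> (real \<times> real) set" where
  "T_tri x = convex hull {(-1, -1), (x, 1), (1, -x)}"

end

theory Submission
  imports Defs
begin

definition det2 :: "real \<times> real \<Rightarrow> real \<times> real \<Rightarrow> real" where
  "det2 p q = fst p * snd q - snd p * fst q"

lemma int_vec_iff: "int_vec z \<longleftrightarrow> (\<exists>i j. z = (of_int i, of_int j))"
  unfolding int_vec_def by (cases z) (auto elim!: Ints_cases)

lemma int_vec_add: "int_vec a \<Longrightarrow> int_vec b \<Longrightarrow> int_vec (a + b)"
  unfolding int_vec_def by auto
lemma int_vec_minus: "int_vec a \<Longrightarrow> int_vec (- a)"
  unfolding int_vec_def by auto
lemma int_vec_diff: "int_vec a \<Longrightarrow> int_vec b \<Longrightarrow> int_vec (a - b)"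
  unfolding int_vec_def by auto
lemma int_vec_scale: "k \<in> \<int> \<Longrightarrow> int_vec a \<Longrightarrow> int_vec (k *\<^sub>R a)"
  unfolding int_vec_def by auto

lemma int_vec_norm_ge1:
  assumes "int_vec z" "z \<noteq> 0" shows "norm z \<ge> 1"
proof -
  obtain i j where z: "z = (of_int i, of_int j)" using assms int_vec_iff by blast
  have ij: "i \<noteq> 0 \<or> j \<noteq> 0" using assms(2) z by (auto simp: zero_prod_def)
  have "1 \<le> (of_int i)^2 + (of_int j :: real)^2"
  proof (cases "i = 0")
    case True
    then have "j \<noteq> 0" using ij by auto
    then have "1 \<le> \<bar>of_int j :: real\<bar>" by linarith
    then have "1 \<le> (of_int j :: real)^2" by (metis abs_ge_self le_less_trans one_le_power power2_abs not_le)
    then show ?thesis by (smt (verit) zero_le_power2)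
  next
    case False
    then have "1 \<le> \<bar>of_int i :: real\<bar>" by linarith
    then have "1 \<le> (of_int i :: real)^2" by (metis abs_ge_self le_less_trans one_le_power power2_abs not_le)
    then show ?thesis by (smt (verit) zero_le_power2)
  qed
  then have "1 \<le> sqrt ((of_int i)^2 + (of_int j :: real)^2)" by simp
  moreover have "norm z = sqrt ((of_int i)^2 + (of_int j :: real)^2)"
    using z by (simp add: norm_Pair)
  ultimately show ?thesis by simp
qed

lemma primitive_int: "primitive_vec v \<Longrightarrow> int_vec v"
  unfolding primitive_vec_def by simp

lemma primitive_nonzero: "primitive_vec v \<Longrightarrow> v \<noteq> 0"
  unfolding primitive_vec_def by (auto simp: zero_prod_def)

lemma primitive_10: "primitive_vec (1, 0)"
  unfolding primitive_vec_def int_vec_def by simp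

lemma int_decomp:
  assumes "int_vec z" "z \<noteq> 0"
  shows "\<exists>g v. g \<ge> 1 \<and> primitive_vec v \<and> z = g *\<^sub>R v"
proof -
  obtain i j where z: "z = (of_int i, of_int j)" using assms int_vec_iff by blast
  have ij: "i \<noteq> 0 \<or> j \<noteq> 0" using assms(2) z by (auto simp: zero_prod_def)
  define g where "g = gcd i j"
  have gpos: "g > 0" using ij g_def by auto
  have cop: "coprime (i div g) (j div g)" using div_gcd_coprime[OF ij] g_def by simp
  have gi: "g dvd i" "g dvd j" using g_def by auto
  define v :: "real \<times> real" where "v = (of_int (i div g), of_int (j div g))"
  have pv: "primitive_vec v" unfolding primitive_vec_def int_vec_def v_def
    using cop by (simp add: coprime_iff_gcd_eq_1)
  have "z = (of_int g :: real) *\<^sub>R v"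
    using z gi unfolding v_def by (auto simp: of_int_mult[symmetric] simp del: of_int_mult)
  moreover have "(of_int g :: real) \<ge> 1" using gpos by simp
  ultimately show ?thesis using pv by blast
qed

definition dset :: "(real \<times> real) set \<Rightarrow> real set" where
  "dset K = {t. \<exists>a b v. a \<in> K \<and> b \<in> K \<and> primitive_vec v \<and> t \<ge> 0 \<and> b - a = t *\<^sub>R v}"

lemma lattice_diam_dset: "lattice_diam K = Sup (dset K)"
  unfolding lattice_diam_def dset_def by simp

lemma dset_bdd:
  assumes "bounded K" shows "bdd_above (dset K)"
proof -
  obtain B where B: "\<forall>x\<in>K. norm x \<le> B" using assms bounded_pos by blast
  have "t \<le> 2 * B" if tK: "t \<in> dset K" for t
  proof -
    obtain a b v where h: "a \<in> K" "b \<in> K" "primitive_vec v" "t \<ge> 0" "b - a = t *\<^sub>R v"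
      using tK unfolding dset_def by blast
    have n1: "norm v \<ge> 1" using int_vec_norm_ge1 primitive_int primitive_nonzero h(3) by blast
    have "t \<le> t * norm v" using n1 h(4) by (simp add: mult_le_cancel_left1)
    also have "\<dots> = norm (b - a)" using h(4,5) by simp
    also have "\<dots> \<le> norm b + norm a" by (rule norm_triangle_ineq4)
    also have "\<dots> \<le> 2 * B" using B h(1,2) by (smt (verit))
    finally show ?thesis .
  qed
  then show ?thesis by (rule bdd_aboveI)
qed

lemma diam_ge:
  assumes "bounded K" "a \<in> K" "b \<in> K" "primitive_vec v" "t \<ge> 0" "b - a = t *\<^sub>R v"
  shows "t \<le> lattice_diam K"
proof -
  have "t \<in> dset K" unfolding dset_def using assms by blast
  then show ?thesis unfolding lattice_diam_dset by (rule cSup_upper[OF _ dset_bdd[OF assms(1)]])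
qed

lemma diam_le:
  assumes "K \<noteq> {}"
    and "\<And>a b v t. a \<in> K \<Longrightarrow> b \<in> K \<Longrightarrow> primitive_vec v \<Longrightarrow> t \<ge> 0 \<Longrightarrow> b - a = t *\<^sub>R v \<Longrightarrow> t \<le> D"
  shows "lattice_diam K \<le> D"
proof -
  obtain a where a: "a \<in> K" using assms(1) by blast
  have "a - a = (0::real) *\<^sub>R (1::real, 0::real)" by (simp add: zero_prod_def)
  then have "0 \<in> dset K" unfolding dset_def using a primitive_10 by blast
  then have ne: "dset K \<noteq> {}" by blast
  have "\<And>t. t \<in> dset K \<Longrightarrow> t \<le> D" unfolding dset_def using assms(2) by blast
  then show ?thesis unfolding lattice_diam_dset by (intro cSup_least[OF ne])
qed

lemma diam_gtE:
  assumes "bounded K" "K \<noteq> {}" "D < lattice_diam K"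
  obtains a b v t where "a \<in> K" "b \<in> K" "primitive_vec v" "t \<ge> 0" "b - a = t *\<^sub>R v" "D < t"
proof -
  obtain a where a: "a \<in> K" using assms(2) by blast
  have "a - a = (0::real) *\<^sub>R (1::real, 0::real)" by (simp add: zero_prod_def)
  then have "0 \<in> dset K" unfolding dset_def using a primitive_10 by blast
  then have ne: "dset K \<noteq> {}" by blast
  then obtain t where tt: "t \<in> dset K" "D < t"
    using less_cSupE assms(3) unfolding lattice_diam_dset by metis
  then show ?thesis using that unfolding dset_def by blast
qed

lemma diam_mono:
  assumes "K \<subseteq> K'" "K \<noteq> {}" "bounded K'"
  shows "lattice_diam K \<le> lattice_diam K'"
proof (rule diam_le[OF assms(2)])
  fix a b v t assume h: "a \<in> K" "b \<in> K" "primitive_vec v" "0 \<le> t" "b - a = t *\<^sub>R v"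
  show "t \<le> lattice_diam K'" using diam_ge[OF assms(3) _ _ h(3,4,5)] h(1,2) assms(1) by blast
qed

definition wset :: "(real \<times> real) set \<Rightarrow> real \<times> real \<Rightarrow> real set" where
  "wset K y = {y \<bullet> (a - b) | a b. a \<in> K \<and> b \<in> K}"

lemma width_dir_wset: "width_dir K y = Sup (wset K y)"
  unfolding width_dir_def wset_def by simp

lemma wset_bdd:
  assumes "bounded K" shows "bdd_above (wset K y)"
proof -
  obtain B where B: "\<forall>x\<in>K. norm x \<le> B" using assms bounded_pos by blast
  have "s \<le> norm y * (2 * B)" if sK: "s \<in> wset K y" for s
  proof -
    obtain a b where h: "a \<in> K" "b \<in> K" "s = y \<bullet> (a - b)" using sK unfolding wset_def by blast
    have "s \<le> norm y * norm (a - b)" using h(3) norm_cauchy_schwarz by simp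
    also have "norm (a - b) \<le> 2 * B"
      using norm_triangle_ineq4[of a b] B h(1,2) by (smt (verit))
    then have "norm y * norm (a - b) \<le> norm y * (2 * B)" by (simp add: mult_left_mono)
    finally show ?thesis .
  qed
  then show ?thesis by (rule bdd_aboveI)
qed

lemma width_ge:
  assumes "bounded K" "p \<in> K" "q \<in> K"
  shows "y \<bullet> (p - q) \<le> width_dir K y"
proof -
  have "y \<bullet> (p - q) \<in> wset K y" unfolding wset_def using assms by blast
  then show ?thesis unfolding width_dir_wset by (rule cSup_upper[OF _ wset_bdd[OF assms(1)]])
qed

lemma width_le:
  assumes "K \<noteq> {}" "\<And>p q. p \<in> K \<Longrightarrow> q \<in> K \<Longrightarrow> y \<bullet> (p - q) \<le> M"
  shows "width_dir K y \<le> M"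
proof -
  have ne: "wset K y \<noteq> {}" using assms(1) unfolding wset_def by blast
  have "\<And>s. s \<in> wset K y \<Longrightarrow> s \<le> M" unfolding wset_def using assms(2) by blast
  then show ?thesis unfolding width_dir_wset by (intro cSup_least[OF ne])
qed

lemma width_nonneg:
  assumes "bounded K" "K \<noteq> {}" shows "0 \<le> width_dir K y"
proof -
  obtain p where "p \<in> K" using assms by blast
  then show ?thesis using width_ge[OF assms(1), of p p y] by simp
qed

lemma lwidth_le:
  assumes "bounded K" "K \<noteq> {}" "int_vec y" "y \<noteq> 0"
  shows "lattice_width K \<le> width_dir K y"
proof -
  have m: "width_dir K y \<in> {width_dir K y | y. int_vec y \<and> y \<noteq> 0}" using assms by blast
  have "bdd_below {width_dir K y | y. int_vec y \<and> y \<noteq> 0}"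
  proof (rule bdd_belowI[where m=0])
    fix x assume "x \<in> {width_dir K y | y. int_vec y \<and> y \<noteq> 0}"
    then obtain y' where "x = width_dir K y'" by blast
    then show "0 \<le> x" using width_nonneg[OF assms(1,2)] by simp
  qed
  then show ?thesis unfolding lattice_width_def by (rule cInf_lower[OF m])
qed

lemma lwidth_ge:
  assumes "\<And>y. int_vec y \<Longrightarrow> y \<noteq> 0 \<Longrightarrow> M \<le> width_dir K y"
  shows "M \<le> lattice_width K"
proof -
  have "int_vec (1::real, 0::real)" "(1::real, 0::real) \<noteq> 0" by (auto simp: int_vec_def zero_prod_def)
  then show ?thesis unfolding lattice_width_def
    by (intro cInf_greatest) (use assms in auto)
qed

lemma det2_simps:
  "det2 (x + y) w = det2 x w + det2 y w" "det2 w (x + y) = det2 w x + det2 w y"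
  "det2 (x - y) w = det2 x w - det2 y w" "det2 w (x - y) = det2 w x - det2 w y"
  "det2 (c *\<^sub>R x) w = c * det2 x w" "det2 w (c *\<^sub>R x) = c * det2 w x"
  "det2 (- x) w = - det2 x w" "det2 w (- x) = - det2 w x"
  "det2 x x = 0"
  by (auto simp: det2_def algebra_simps)

lemma coord_exists:
  assumes "det2 u v \<noteq> 0"
  shows "w = (det2 w v / det2 u v) *\<^sub>R u + (det2 u w / det2 u v) *\<^sub>R v"
proof -
  have e: "det2 u v *\<^sub>R w = det2 w v *\<^sub>R u + det2 u w *\<^sub>R v"
    by (simp add: det2_def prod_eq_iff algebra_simps)
  have "w = (1 / det2 u v) *\<^sub>R (det2 u v *\<^sub>R w)" using assms by simp
  also have "\<dots> = (det2 w v / det2 u v) *\<^sub>R u + (det2 u w / det2 u v) *\<^sub>R v"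
    unfolding e by (simp add: scaleR_add_right)
  finally show ?thesis .
qed

lemma coord_unique:
  assumes "det2 u v \<noteq> 0" "x *\<^sub>R u + y *\<^sub>R v = x' *\<^sub>R u + y' *\<^sub>R v"
  shows "x = x' \<and> y = y'"
proof -
  have "det2 (x *\<^sub>R u + y *\<^sub>R v) v = det2 (x' *\<^sub>R u + y' *\<^sub>R v) v" using assms(2) by simp
  then have 1: "x * det2 u v = x' * det2 u v" by (simp add: det2_simps)
  have "det2 u (x *\<^sub>R u + y *\<^sub>R v) = det2 u (x' *\<^sub>R u + y' *\<^sub>R v)" using assms(2) by simp
  then have 2: "y * det2 u v = y' * det2 u v" by (simp add: det2_simps)
  show ?thesis using 1 2 assms(1) by simp
qed

lemma tri_mem:
  "w \<in> convex hull {a, b, c} \<longleftrightarrow>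
   (\<exists>x y. 0 \<le> x \<and> 0 \<le> y \<and> x + y \<le> 1 \<and> w = a + x *\<^sub>R (b - a) + y *\<^sub>R (c - a))"
  unfolding convex_hull_3_alt by blast

definition cfg where
  "cfg a b c za zb zc l D \<longleftrightarrow> int_vec za \<and> int_vec zb \<and> int_vec zc \<and> za + zb + zc = 0 \<and>
     (det2 za zb = 1 \<or> det2 za zb = -1) \<and> 0 < l \<and> l < 1 \<and> 0 < D \<and>
     a + D *\<^sub>R za = l *\<^sub>R b + (1 - l) *\<^sub>R c \<and>
     b + D *\<^sub>R zb = l *\<^sub>R c + (1 - l) *\<^sub>R a \<and>
     c + D *\<^sub>R zc = l *\<^sub>R a + (1 - l) *\<^sub>R b"

lemma cfg_rot:
  assumes "cfg a b c za zb zc l D" shows "cfg b c a zb zc za l D"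
proof -
  have zc: "zc = - za - zb" using assms unfolding cfg_def by (simp add: algebra_simps eq_neg_iff_add_eq_0)
  have "det2 zb zc = det2 za zb" unfolding zc by (simp add: det2_def algebra_simps)
  then show ?thesis using assms unfolding cfg_def by (auto simp: algebra_simps)
qed

lemma cfg_rev:
  assumes "cfg a b c za zb zc l D" shows "cfg a c b za zc zb (1 - l) D"
proof -
  have zc: "zc = - za - zb" using assms unfolding cfg_def by (simp add: algebra_simps eq_neg_iff_add_eq_0)
  have "det2 za zc = - det2 za zb" unfolding zc by (simp add: det2_simps)
  then show ?thesis using assms unfolding cfg_def by (auto simp: algebra_simps)
qed

lemma cfg_e:
  assumes "cfg a b c za zb zc l D"
  shows "D *\<^sub>R za = l *\<^sub>R (b - a) + (1 - l) *\<^sub>R (c - a)"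
    and "D *\<^sub>R zb = l *\<^sub>R (c - a) - (b - a)"
proof -
  have e1: "a + D *\<^sub>R za = l *\<^sub>R b + (1 - l) *\<^sub>R c" and e2: "b + D *\<^sub>R zb = l *\<^sub>R c + (1 - l) *\<^sub>R a"
    using assms unfolding cfg_def by auto
  from e1 show "D *\<^sub>R za = l *\<^sub>R (b - a) + (1 - l) *\<^sub>R (c - a)"
    by (simp add: algebra_simps prod_eq_iff, (smt (verit))?)
  from e2 show "D *\<^sub>R zb = l *\<^sub>R (c - a) - (b - a)"
    by (simp add: algebra_simps prod_eq_iff, (smt (verit))?)
qed

lemma int_cases3:
  assumes "(m::real) \<in> \<int>" shows "m = 0 \<or> 1 \<le> m \<or> m \<le> -1"
proof -
  obtain i where m: "m = of_int i" using assms Ints_cases by blast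
  have "i = 0 \<or> 1 \<le> i \<or> i \<le> -1" by linarith
  then show ?thesis unfolding m by auto
qed

lemma lb1: assumes "0 < (l::real)" "l < 1" "1 \<le> x" shows "l \<le> l*x \<and> l*x \<le> x - 1 + l"
proof -
  have "0 \<le> (1-l)*(x-1)" "0 \<le> l*(x-1)" using assms by auto
  then show ?thesis by (simp add: algebra_simps)
qed
lemma lb2: assumes "0 < (l::real)" "l < 1" "x \<le> -1" shows "l*x \<le> -l \<and> x + 1 - l \<le> l*x"
proof -
  have "0 \<le> (1-l)*(-x-1)" "0 \<le> l*(-x-1)" using assms by auto
  then show ?thesis by (simp add: algebra_simps)
qed

lemma absI: "1 \<le> x \<or> x \<le> -1 \<Longrightarrow> 1 \<le> \<bar>x::real\<bar>" by auto

lemma int_ineq1: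
  assumes "(m::real) \<in> \<int>" "n \<in> \<int>" "m \<noteq> 0 \<or> n \<noteq> 0" "0 < l" "l < 1"
  shows "1 \<le> \<bar>l*m + (l-1)*n\<bar> \<or> 1 \<le> \<bar>m + l*n\<bar> \<or> 1 \<le> \<bar>(1-l)*m + n\<bar>"
proof -
  have cm: "m = 0 \<or> 1 \<le> m \<or> m \<le> -1" and cn: "n = 0 \<or> 1 \<le> n \<or> n \<le> -1"
    using int_cases3 assms by auto
  have e1: "l*m + (l-1)*n = l*m + l*n - n" "(1-l)*m + n = m - l*m + n" by (auto simp: algebra_simps)
  note A = lb1[OF assms(4,5)] lb2[OF assms(4,5)]
  from cm show ?thesis
  proof (elim disjE)
    assume m0: "m = 0" then have "n \<noteq> 0" using assms(3) by simp
    then have "1 \<le> \<bar>m - l*m + n\<bar>" using cn m0 by (intro absI) simp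
    then show ?thesis unfolding e1 by simp
  next
    assume m1: "1 \<le> m"
    from cn show ?thesis
    proof (elim disjE)
      assume "n = 0" then have "1 \<le> \<bar>m + l*n\<bar>" using m1 by (intro absI) simp
      then show ?thesis unfolding e1 by simp
    next
      assume n1: "1 \<le> n" then have "1 \<le> \<bar>m + l*n\<bar>" using m1 A(1)[OF n1] using assms(4,5) by (intro absI) linarith
      then show ?thesis unfolding e1 by simp
    next
      assume n1: "n \<le> -1" then have "1 \<le> \<bar>l*m + l*n - n\<bar>" using m1 A(1)[OF m1] A(2)[OF n1] using assms(4,5) by (intro absI) linarith
      then show ?thesis unfolding e1 by simp
    qed
  next
    assume m1: "m \<le> -1"
    from cn show ?thesis
    proof (elim disjE)
      assume "n = 0" then have "1 \<le> \<bar>m + l*n\<bar>" using m1 by (intro absI) simp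
      then show ?thesis unfolding e1 by simp
    next
      assume n1: "1 \<le> n" then have "1 \<le> \<bar>l*m + l*n - n\<bar>" using A(2)[OF m1] A(1)[OF n1] using assms(4,5) by (intro absI) linarith
      then show ?thesis unfolding e1 by simp
    next
      assume n1: "n \<le> -1" then have "1 \<le> \<bar>m + l*n\<bar>" using m1 A(2)[OF n1] using assms(4,5) by (intro absI) linarith
      then show ?thesis unfolding e1 by simp
    qed
  qed
qed

lemma int_ineq2:
  assumes "(m::real) \<in> \<int>" "n \<in> \<int>" "m \<noteq> 0 \<or> n \<noteq> 0" "0 < l" "l < 1"
  shows "1 \<le> \<bar>m*l - n\<bar> \<or> 1 \<le> \<bar>m*(1-l) + n*l\<bar> \<or> 1 \<le> \<bar>m - n*(1-l)\<bar>"
proof -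
  have cm: "m = 0 \<or> 1 \<le> m \<or> m \<le> -1" and cn: "n = 0 \<or> 1 \<le> n \<or> n \<le> -1"
    using int_cases3 assms by auto
  have e1: "m*(1-l) + n*l = m - l*m + l*n" "m - n*(1-l) = m - n + l*n" "m*l - n = l*m - n"
    by (auto simp: algebra_simps)
  note A = lb1[OF assms(4,5)] lb2[OF assms(4,5)]
  from cm show ?thesis
  proof (elim disjE)
    assume m0: "m = 0" then have "n \<noteq> 0" using assms(3) by simp
    then have "1 \<le> \<bar>l*m - n\<bar>" using cn m0 by (intro absI) auto
    then show ?thesis unfolding e1 by simp
  next
    assume m1: "1 \<le> m"
    from cn show ?thesis
    proof (elim disjE)
      assume "n = 0" then have "1 \<le> \<bar>m - n + l*n\<bar>" using m1 by (intro absI) simp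
      then show ?thesis unfolding e1 by simp
    next
      assume n1: "1 \<le> n" then have "1 \<le> \<bar>m - l*m + l*n\<bar>" using A(1)[OF m1] A(1)[OF n1] using assms(4,5) by (intro absI) linarith
      then show ?thesis unfolding e1 by simp
    next
      assume n1: "n \<le> -1" then have "1 \<le> \<bar>l*m - n\<bar>" using A(1)[OF m1] using assms(4,5) by (intro absI) linarith
      then show ?thesis unfolding e1 by simp
    qed
  next
    assume m1: "m \<le> -1"
    from cn show ?thesis
    proof (elim disjE)
      assume "n = 0" then have "1 \<le> \<bar>m - n + l*n\<bar>" using m1 by (intro absI) simp
      then show ?thesis unfolding e1 by simp
    next
      assume n1: "1 \<le> n" then have "1 \<le> \<bar>l*m - n\<bar>" using A(2)[OF m1] using assms(4,5) by (intro absI) linarith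
      then show ?thesis unfolding e1 by simp
    next
      assume n1: "n \<le> -1" then have "1 \<le> \<bar>m - l*m + l*n\<bar>" using A(2)[OF m1] A(2)[OF n1] using assms(4,5) by (intro absI) linarith
      then show ?thesis unfolding e1 by simp
    qed
  qed
qed

lemma int_vec_inner: "int_vec y \<Longrightarrow> int_vec z \<Longrightarrow> y \<bullet> z \<in> \<int>"
  unfolding int_vec_def inner_prod_def by (auto simp: inner_real_def)

lemma int_vec_det2: "int_vec y \<Longrightarrow> int_vec z \<Longrightarrow> det2 y z \<in> \<int>"
  unfolding int_vec_def det2_def by auto

lemma orth_zero:
  assumes "det2 za zb \<noteq> 0" "y \<bullet> za = 0" "y \<bullet> zb = 0" shows "y = 0"
proof -
  have h: "fst y * fst za + snd y * snd za = 0" "fst y * fst zb + snd y * snd zb = 0"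
    using assms(2,3) by (auto simp: inner_prod_def inner_real_def)
  have "fst y * det2 za zb = 0" unfolding det2_def using h by algebra
  moreover have "snd y * det2 za zb = 0" unfolding det2_def using h by algebra
  ultimately show ?thesis using assms(1) by (simp add: prod_eq_iff)
qed

lemma dual_vec:
  assumes "int_vec za" "int_vec zb" "det2 za zb = 1 \<or> det2 za zb = -1" "m \<in> \<int>" "n \<in> \<int>"
  shows "\<exists>y. int_vec y \<and> y \<bullet> za = m \<and> y \<bullet> zb = n"
proof -
  define d where "d = det2 za zb"
  have dd: "d * d = 1" using assms(3) d_def by auto
  define y where "y = d *\<^sub>R (m * snd zb - n * snd za, n * fst za - m * fst zb)"
  have dI: "d \<in> \<int>" using assms(3) d_def by auto
  have "int_vec y" unfolding y_def using assms dI int_vec_def by auto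
  moreover have "y \<bullet> za = m"
  proof -
    have "y \<bullet> za = m * (d * d)" unfolding y_def d_def det2_def
      by (simp add: inner_prod_def inner_real_def algebra_simps)
    then show ?thesis using dd by simp
  qed
  moreover have "y \<bullet> zb = n"
  proof -
    have "y \<bullet> zb = n * (d * d)" unfolding y_def d_def det2_def
      by (simp add: inner_prod_def inner_real_def algebra_simps)
    then show ?thesis using dd by simp
  qed
  ultimately show ?thesis by blast
qed

lemma int_coords:
  assumes "int_vec za" "int_vec zb" "det2 za zb = 1 \<or> det2 za zb = -1" "int_vec z"
  shows "\<exists>m n. m \<in> \<int> \<and> n \<in> \<int> \<and> z = m *\<^sub>R za + n *\<^sub>R zb"
proof -
  define d where "d = det2 za zb"
  have d0: "d \<noteq> 0" using assms(3) d_def by auto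
  have inv: "x / d = d * x" for x using assms(3) d_def by auto
  have "z = (det2 z zb / d) *\<^sub>R za + (det2 za z / d) *\<^sub>R zb"
    using coord_exists[of za zb z] d0 d_def by simp
  then have "z = (d * det2 z zb) *\<^sub>R za + (d * det2 za z) *\<^sub>R zb" by (simp add: inv)
  moreover have "d * det2 z zb \<in> \<int>" "d * det2 za z \<in> \<int>"
    using int_vec_det2 assms d_def by auto
  ultimately show ?thesis by blast
qed

lemma za_primitive:
  assumes "int_vec za" "int_vec zb" "det2 za zb = 1 \<or> det2 za zb = -1"
  shows "primitive_vec za"
proof -
  obtain i j where za: "za = (of_int i, of_int j)" using assms(1) int_vec_iff by blast
  obtain k l where zb: "zb = (of_int k, of_int l)" using assms(2) int_vec_iff by blast
  have "of_int (i * l - j * k) = det2 za zb" unfolding za zb det2_def by simp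
  then have h: "i * l - j * k = 1 \<or> i * l - j * k = -1" using assms(3)
    by (metis of_int_eq_1_iff of_int_eq_iff of_int_minus of_int_1)
  have "coprime i j"
  proof (rule coprimeI)
    fix c assume "c dvd i" "c dvd j"
    then have "c dvd (i * l - j * k)" by simp
    then show "is_unit c" using h by auto
  qed
  then show ?thesis unfolding primitive_vec_def int_vec_def za
    by (simp add: coprime_iff_gcd_eq_1)
qed

lemma det2_swap: "det2 v u = - det2 u v" by (simp add: det2_def)

lemma kappa_pos: "0 < l*l - l + (1::real)"
proof -
  have "l*l - l + 1 = (l - 1/2)^2 + 3/4" by (simp add: power2_eq_square algebra_simps)
  moreover have "0 \<le> (l - 1/2)^2" by simp
  ultimately show ?thesis by linarith
qed

lemma cfg_facts:
  assumes "cfg a b c za zb zc l D"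
  shows "int_vec za" "int_vec zb" "int_vec zc" "0 < l" "l < 1" "0 < D"
    "det2 za zb = 1 \<or> det2 za zb = -1" "za + zb + zc = 0"
  using assms unfolding cfg_def by auto

lemma cfg_uv:
  assumes "cfg a b c za zb zc l D"
  shows "(l*l - l + 1) *\<^sub>R (b - a) = D *\<^sub>R (l *\<^sub>R za + (l - 1) *\<^sub>R zb)"
    and "(l*l - l + 1) *\<^sub>R (c - a) = D *\<^sub>R (za + l *\<^sub>R zb)"
proof -
  note E = cfg_e[OF assms]
  have "D *\<^sub>R (l *\<^sub>R za + (l - 1) *\<^sub>R zb) = l *\<^sub>R (D *\<^sub>R za) + (l - 1) *\<^sub>R (D *\<^sub>R zb)"
    by (simp add: algebra_simps)
  also have "\<dots> = l *\<^sub>R (l *\<^sub>R (b - a) + (1 - l) *\<^sub>R (c - a)) + (l - 1) *\<^sub>R (l *\<^sub>R (c - a) - (b - a))"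
    using E by simp
  also have "\<dots> = (l*l - l + 1) *\<^sub>R (b - a)" by (simp add: prod_eq_iff algebra_simps)
  finally show "(l*l - l + 1) *\<^sub>R (b - a) = D *\<^sub>R (l *\<^sub>R za + (l - 1) *\<^sub>R zb)" by simp
  have "D *\<^sub>R (za + l *\<^sub>R zb) = D *\<^sub>R za + l *\<^sub>R (D *\<^sub>R zb)"
    by (simp add: algebra_simps)
  also have "\<dots> = (l *\<^sub>R (b - a) + (1 - l) *\<^sub>R (c - a)) + l *\<^sub>R (l *\<^sub>R (c - a) - (b - a))"
    using E by simp
  also have "\<dots> = (l*l - l + 1) *\<^sub>R (c - a)" by (simp add: prod_eq_iff algebra_simps)
  finally show "(l*l - l + 1) *\<^sub>R (c - a) = D *\<^sub>R (za + l *\<^sub>R zb)" by simp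
qed

lemma det2_exp: "det2 (l *\<^sub>R u + (1 - l) *\<^sub>R v) (l *\<^sub>R v - u) = (l*l - l + 1) * det2 u v"
  by (simp add: det2_def algebra_simps)

lemma cfg_det:
  assumes "cfg a b c za zb zc l D"
  shows "D^2 * det2 za zb = (l*l - l + 1) * det2 (b - a) (c - a)"
proof -
  note E = cfg_e[OF assms]
  have "D^2 * det2 za zb = det2 (D *\<^sub>R za) (D *\<^sub>R zb)" by (simp add: det2_simps power2_eq_square)
  also have "\<dots> = det2 (l *\<^sub>R (b - a) + (1 - l) *\<^sub>R (c - a)) (l *\<^sub>R (c - a) - (b - a))"
    using E by simp
  also have "\<dots> = (l*l - l + 1) * det2 (b - a) (c - a)"
    by (rule det2_exp)
  finally show ?thesis .
qed

lemma cfg_Delta: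
  assumes "cfg a b c za zb zc l D"
  shows "det2 (b - a) (c - a) \<noteq> 0"
proof
  assume "det2 (b - a) (c - a) = 0"
  then have "D^2 * det2 za zb = 0" using cfg_det[OF assms] by simp
  then show False using cfg_facts[OF assms] by auto
qed

lemma hull3_compact: "compact (convex hull {a, b, c::real \<times> real})"
  by (rule finite_imp_compact_convex_hull) simp

lemma hull3_bounded: "bounded (convex hull {a, b, c::real \<times> real})"
  by (rule compact_imp_bounded[OF hull3_compact])

lemma hull3_verts: "a \<in> convex hull {a, b, c}" "b \<in> convex hull {a, b, c}" "c \<in> convex hull {a, b, c}"
  by (auto intro: hull_inc)

lemma cfg_inner:
  assumes "cfg a b c za zb zc l D"
  shows "(l*l - l + 1) * (y \<bullet> (b - a)) = D * (l * (y \<bullet> za) + (l - 1) * (y \<bullet> zb))"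
    and "(l*l - l + 1) * (y \<bullet> (c - a)) = D * (y \<bullet> za + l * (y \<bullet> zb))"
  using arg_cong[OF cfg_uv(1)[OF assms], of "inner y"] arg_cong[OF cfg_uv(2)[OF assms], of "inner y"]
  by (simp_all add: inner_add_right)

lemma cfg_lin:
  assumes "cfg a b c za zb zc l D" "w = a + x *\<^sub>R (b - a) + y' *\<^sub>R (c - a)"
  shows "(l*l - l + 1) * (y \<bullet> (w - a)) = D * (x * (l * (y \<bullet> za) + (l - 1) * (y \<bullet> zb)) + y' * (y \<bullet> za + l * (y \<bullet> zb)))"
proof -
  have wa: "w - a = x *\<^sub>R (b - a) + y' *\<^sub>R (c - a)" using assms(2) by simp
  have "y \<bullet> (w - a) = x * (y \<bullet> (b - a)) + y' * (y \<bullet> (c - a))"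
    unfolding wa by (simp only: inner_add_right inner_scaleR_right)
  then show ?thesis using cfg_inner[OF assms(1), of y] by algebra
qed

lemma helper_div:
  assumes "0 < k" "0 < (D::real)" "k * x = D * X" "1 \<le> \<bar>X\<bar>" "\<bar>x\<bar> \<le> W"
  shows "D / k \<le> W"
proof -
  have "D \<le> D * \<bar>X\<bar>" using assms(2,4) by (simp add: mult_le_cancel_left1)
  also have "\<dots> = \<bar>D * X\<bar>" using assms(2) by (simp add: abs_mult)
  also have "\<dots> = k * \<bar>x\<bar>" using assms(1,3) by (simp flip: assms(3) add: abs_mult)
  also have "\<dots> \<le> k * W" using assms(1,5) by simp
  finally show ?thesis using assms(1) by (simp add: divide_le_eq mult.commute)
qed

lemma cfg_width_lower:
  assumes "cfg a b c za zb zc l D" "int_vec y" "y \<noteq> 0"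
  shows "D / (l*l - l + 1) \<le> width_dir (convex hull {a, b, c}) y"
proof -
  note F = cfg_facts[OF assms(1)]
  define m where "m = y \<bullet> za"
  define n where "n = y \<bullet> zb"
  define k where "k = l*l - l + 1"
  define W where "W = width_dir (convex hull {a, b, c}) y"
  have k: "0 < k" unfolding k_def by (rule kappa_pos)
  have mI: "m \<in> \<int>" "n \<in> \<int>" using int_vec_inner assms(2) F(1,2) m_def n_def by auto
  have d0: "det2 za zb \<noteq> 0" using F(7) by auto
  have mn: "m \<noteq> 0 \<or> n \<noteq> 0"
  proof (rule ccontr)
    assume "\<not> (m \<noteq> 0 \<or> n \<noteq> 0)"
    then have "y \<bullet> za = 0" "y \<bullet> zb = 0" unfolding m_def n_def by auto
    then have "y = 0" by (rule orth_zero[OF d0])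
    then show False using assms(3) by simp
  qed
  have I1: "k * (y \<bullet> b - y \<bullet> a) = D * (l * m + (l - 1) * n)"
    using cfg_inner(1)[OF assms(1), of y] unfolding k_def m_def n_def by (simp add: inner_diff_right)
  have I2: "k * (y \<bullet> c - y \<bullet> a) = D * (m + l * n)"
    using cfg_inner(2)[OF assms(1), of y] unfolding k_def m_def n_def by (simp add: inner_diff_right)
  have I3: "k * (y \<bullet> c - y \<bullet> b) = D * ((1 - l) * m + n)"
  proof -
    have "k * (y \<bullet> c - y \<bullet> b) = k * (y \<bullet> c - y \<bullet> a) - k * (y \<bullet> b - y \<bullet> a)" by (simp add: algebra_simps)
    then show ?thesis unfolding I1 I2 by (simp add: algebra_simps)
  qed
  note B = hull3_bounded[of a b c]
  note V = hull3_verts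
  have w1: "\<bar>y \<bullet> b - y \<bullet> a\<bar> \<le> W"
    using width_ge[OF B V(2) V(1), of y] width_ge[OF B V(1) V(2), of y] unfolding W_def
    by (simp add: inner_diff_right)
  have w2: "\<bar>y \<bullet> c - y \<bullet> a\<bar> \<le> W"
    using width_ge[OF B V(3) V(1), of y] width_ge[OF B V(1) V(3), of y] unfolding W_def
    by (simp add: inner_diff_right)
  have w3: "\<bar>y \<bullet> c - y \<bullet> b\<bar> \<le> W"
    using width_ge[OF B V(3) V(2), of y] width_ge[OF B V(2) V(3), of y] unfolding W_def
    by (simp add: inner_diff_right)
  from int_ineq1[OF mI mn F(4,5)] have "D / k \<le> W"
  proof (elim disjE)
    assume "1 \<le> \<bar>l * m + (l - 1) * n\<bar>" then show ?thesis using helper_div[OF k F(6) I1 _ w1] by simp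
  next
    assume "1 \<le> \<bar>m + l * n\<bar>" then show ?thesis using helper_div[OF k F(6) I2 _ w2] by simp
  next
    assume "1 \<le> \<bar>(1 - l) * m + n\<bar>" then show ?thesis using helper_div[OF k F(6) I3 _ w3] by simp
  qed
  then show ?thesis unfolding k_def W_def .
qed

lemma tri_coords:
  assumes "w \<in> convex hull {a, b, c}"
  obtains x y where "0 \<le> x" "0 \<le> y" "x + y \<le> 1" "w = a + x *\<^sub>R (b - a) + y *\<^sub>R (c - a)"
  using assms tri_mem by blast

lemma cfg_y0:
  assumes "cfg a b c za zb zc l D"
  obtains y0 where "int_vec y0" "y0 \<noteq> 0" "y0 \<bullet> za = 1" "y0 \<bullet> zb = 0"
proof -
  note F = cfg_facts[OF assms]
  obtain y0 where "int_vec y0" "y0 \<bullet> za = 1" "y0 \<bullet> zb = 0"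
    using dual_vec[OF F(1,2,7), of 1 0] by auto
  moreover have "y0 \<noteq> 0" using calculation by auto
  ultimately show ?thesis using that by blast
qed

lemma cfg_y0_val:
  assumes "cfg a b c za zb zc l D" "y0 \<bullet> za = 1" "y0 \<bullet> zb = 0" "w \<in> convex hull {a, b, c}"
  obtains x y where "0 \<le> x" "0 \<le> y" "x + y \<le> 1" "w = a + x *\<^sub>R (b - a) + y *\<^sub>R (c - a)"
    "(l*l - l + 1) * (y0 \<bullet> (w - a)) = D * (x * l + y)"
proof -
  obtain x y where h: "0 \<le> x" "0 \<le> y" "x + y \<le> 1" "w = a + x *\<^sub>R (b - a) + y *\<^sub>R (c - a)"
    using tri_coords[OF assms(4)] by blast
  have "(l*l - l + 1) * (y0 \<bullet> (w - a)) = D * (x * l + y)"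
    using cfg_lin[OF assms(1) h(4), of y0] assms(2,3) by simp
  then show ?thesis using h that by blast
qed

lemma cfg_lwidth:
  assumes "cfg a b c za zb zc l D"
  shows "lattice_width (convex hull {a, b, c}) = D / (l*l - l + 1)"
proof (rule antisym)
  note F = cfg_facts[OF assms]
  define k where "k = l*l - l + 1"
  have k: "0 < k" unfolding k_def by (rule kappa_pos)
  obtain y0 where y0: "int_vec y0" "y0 \<noteq> 0" "y0 \<bullet> za = 1" "y0 \<bullet> zb = 0"
    using cfg_y0[OF assms] by blast
  have "width_dir (convex hull {a, b, c}) y0 \<le> D / k"
  proof (rule width_le)
    show "convex hull {a, b, c} \<noteq> {}" by simp
    fix p q assume pq: "p \<in> convex hull {a, b, c}" "q \<in> convex hull {a, b, c}"
    obtain x y where p: "0 \<le> x" "0 \<le> y" "x + y \<le> 1" "k * (y0 \<bullet> (p - a)) = D * (x * l + y)"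
      using cfg_y0_val[OF assms y0(3,4) pq(1)] unfolding k_def by blast
    obtain x' y' where q: "0 \<le> x'" "0 \<le> y'" "x' + y' \<le> 1" "k * (y0 \<bullet> (q - a)) = D * (x' * l + y')"
      using cfg_y0_val[OF assms y0(3,4) pq(2)] unfolding k_def by blast
    have "x * l \<le> x" using p(1) F(5) by (simp add: mult_left_le)
    then have "x * l + y \<le> 1" using p by linarith
    moreover have "0 \<le> x' * l + y'" using q(1,2) F(4) by simp
    ultimately have "D * (x * l + y) - D * (x' * l + y') \<le> D * 1"
      using F(6) by (simp add: right_diff_distrib[symmetric] mult_left_mono)
    then have "k * (y0 \<bullet> (p - q)) \<le> D"
      using p(4) q(4) by (simp add: inner_diff_right algebra_simps)
    then show "y0 \<bullet> (p - q) \<le> D / k" using k by (simp add: le_divide_eq mult.commute)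
  qed
  moreover have "lattice_width (convex hull {a, b, c}) \<le> width_dir (convex hull {a, b, c}) y0"
    by (rule lwidth_le[OF hull3_bounded[of a b c] _ y0(1) y0(2)]) simp
  ultimately show "lattice_width (convex hull {a, b, c}) \<le> D / (l*l - l + 1)"
    unfolding k_def by linarith
  show "D / (l*l - l + 1) \<le> lattice_width (convex hull {a, b, c})"
    by (rule lwidth_ge) (rule cfg_width_lower[OF assms])
qed

lemma convex_body_tri:
  assumes "det2 (b - a) (c - a) \<noteq> 0"
  shows "convex_body (convex hull {a, b, c})"
proof -
  define u where "u = b - a"
  define v where "v = c - a"
  define d where "d = det2 u v"
  have d: "d \<noteq> 0" using assms u_def v_def d_def by simp
  define Op where "Op = {w. 0 < det2 (w - a) v / d \<and> 0 < det2 u (w - a) / d \<and>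
                        det2 (w - a) v / d + det2 u (w - a) / d < 1}"
  have "open Op" unfolding Op_def det2_def
    by (intro open_Collect_conj open_Collect_less continuous_intros) (use d in auto)
  moreover have "Op \<subseteq> convex hull {a, b, c}"
  proof
    fix w assume "w \<in> Op"
    then have h: "0 < det2 (w - a) v / d" "0 < det2 u (w - a) / d"
      "det2 (w - a) v / d + det2 u (w - a) / d < 1" unfolding Op_def by auto
    have "w - a = (det2 (w - a) v / d) *\<^sub>R u + (det2 u (w - a) / d) *\<^sub>R v"
      using coord_exists[of u v "w - a"] d d_def by simp
    then have "w = a + (det2 (w - a) v / d) *\<^sub>R (b - a) + (det2 u (w - a) / d) *\<^sub>R (c - a)"
      unfolding u_def v_def by (simp add: algebra_simps)
    then show "w \<in> convex hull {a, b, c}" unfolding tri_mem using h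
      by (intro exI[of _ "det2 (w - a) v / d"] exI[of _ "det2 u (w - a) / d"]) auto
  qed
  ultimately have "Op \<subseteq> interior (convex hull {a, b, c})" by (rule interior_maximal[rotated])
  moreover have "a + (1/3) *\<^sub>R u + (1/3) *\<^sub>R v \<in> Op"
    unfolding Op_def using d d_def by (simp add: det2_simps)
  ultimately have "interior (convex hull {a, b, c}) \<noteq> {}" by blast
  then show ?thesis unfolding convex_body_def using hull3_compact by (simp add: convex_convex_hull)
qed

lemma cfg_convex_body:
  assumes "cfg a b c za zb zc l D" shows "convex_body (convex hull {a, b, c})"
  by (rule convex_body_tri[OF cfg_Delta[OF assms]])

lemma cfg_red_a:
  assumes "cfg a b c za zb zc l D" "compact K" "K \<noteq> {}" "K \<subseteq> convex hull {a, b, c}" "a \<notin> K"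
  shows "lattice_width K < D / (l*l - l + 1)"
proof -
  note F = cfg_facts[OF assms(1)]
  define k where "k = l*l - l + 1"
  have k: "0 < k" unfolding k_def by (rule kappa_pos)
  obtain y0 where y0: "int_vec y0" "y0 \<noteq> 0" "y0 \<bullet> za = 1" "y0 \<bullet> zb = 0"
    using cfg_y0[OF assms(1)] by blast
  have cont: "continuous_on K (\<lambda>w. y0 \<bullet> w)" by (intro continuous_intros)
  obtain w1 where w1: "w1 \<in> K" "\<forall>w\<in>K. y0 \<bullet> w1 \<le> y0 \<bullet> w"
    using continuous_attains_inf[OF assms(2,3) cont] by blast
  have w1T: "w1 \<in> convex hull {a, b, c}" using w1(1) assms(4) by blast
  obtain x y where xy: "0 \<le> x" "0 \<le> y" "x + y \<le> 1" "w1 = a + x *\<^sub>R (b - a) + y *\<^sub>R (c - a)"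
    "k * (y0 \<bullet> (w1 - a)) = D * (x * l + y)"
    using cfg_y0_val[OF assms(1) y0(3,4) w1T] unfolding k_def by blast
  have xy0: "x \<noteq> 0 \<or> y \<noteq> 0"
  proof (rule ccontr)
    assume "\<not> (x \<noteq> 0 \<or> y \<noteq> 0)"
    then have "w1 = a" using xy(4) by simp
    then show False using w1(1) assms(5) by simp
  qed
  have pos: "0 < x * l + y"
  proof (cases "x = 0")
    case True then show ?thesis using xy0 xy(2) by simp
  next
    case False then have "0 < x * l" using xy(1) F(4) by simp
    then show ?thesis using xy(2) by linarith
  qed
  have e1: "0 < y0 \<bullet> (w1 - a)"
  proof -
    have "0 < k * (y0 \<bullet> (w1 - a))" unfolding xy(5) using F(6) pos by simp
    then show ?thesis using k by (simp add: zero_less_mult_iff)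
  qed
  have "width_dir K (- y0) \<le> D / k - y0 \<bullet> (w1 - a)"
  proof (rule width_le[OF assms(3)])
    fix p q assume pq: "p \<in> K" "q \<in> K"
    have qT: "q \<in> convex hull {a, b, c}" using pq(2) assms(4) by blast
    obtain x' y' where q: "0 \<le> x'" "0 \<le> y'" "x' + y' \<le> 1"
      "k * (y0 \<bullet> (q - a)) = D * (x' * l + y')"
      using cfg_y0_val[OF assms(1) y0(3,4) qT] unfolding k_def by blast
    have "x' * l \<le> x'" using q(1) F(5) by (simp add: mult_left_le)
    then have "x' * l + y' \<le> 1" using q by linarith
    then have "k * (y0 \<bullet> (q - a)) \<le> D" unfolding q(4) using F(6) by (simp add: mult_left_le)
    then have h1: "y0 \<bullet> (q - a) \<le> D / k" using k by (simp add: le_divide_eq mult.commute)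
    have h2: "y0 \<bullet> w1 \<le> y0 \<bullet> p" using w1(2) pq(1) by blast
    have "- y0 \<bullet> (p - q) = y0 \<bullet> (q - a) - (y0 \<bullet> p - y0 \<bullet> a)" by (simp add: inner_diff_right)
    also have "\<dots> \<le> D / k - (y0 \<bullet> w1 - y0 \<bullet> a)" using h1 h2 by linarith
    finally show "- y0 \<bullet> (p - q) \<le> D / k - y0 \<bullet> (w1 - a)" by (simp add: inner_diff_right)
  qed
  moreover have "lattice_width K \<le> width_dir K (- y0)"
    by (rule lwidth_le[OF compact_imp_bounded[OF assms(2)] assms(3)]) (use y0 int_vec_minus in auto)
  ultimately show ?thesis using e1 unfolding k_def by linarith
qed

lemma cfg_reduced:
  assumes "cfg a b c za zb zc l D"
  shows "lattice_reduced (convex hull {a, b, c})"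
  unfolding lattice_reduced_def
proof (intro conjI allI impI)
  show "convex_body (convex hull {a, b, c})" by (rule cfg_convex_body[OF assms])
  fix C' assume h: "convex_body C' \<and> C' \<subset> convex hull {a, b, c}"
  have cC: "compact C'" "convex C'" "C' \<noteq> {}" using h interior_subset unfolding convex_body_def by auto
  have sub: "C' \<subseteq> convex hull {a, b, c}" using h by auto
  have "\<not> {a, b, c} \<subseteq> C'"
  proof
    assume "{a, b, c} \<subseteq> C'"
    then have "convex hull {a, b, c} \<subseteq> C'" using cC(2) by (simp add: hull_minimal)
    then show False using h by auto
  qed
  then have "a \<notin> C' \<or> b \<notin> C' \<or> c \<notin> C'" by auto
  then have "lattice_width C' < D / (l*l - l + 1)"
  proof (elim disjE)
    assume "a \<notin> C'" then show ?thesis by (rule cfg_red_a[OF assms cC(1) cC(3) sub])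
  next
    assume bn: "b \<notin> C'"
    have e: "convex hull {a, b, c} = convex hull {b, c, a}" by (simp add: insert_commute)
    show ?thesis by (rule cfg_red_a[OF cfg_rot[OF assms] cC(1) cC(3) _ bn]) (use sub e in simp)
  next
    assume cn: "c \<notin> C'"
    have e: "convex hull {a, b, c} = convex hull {c, a, b}" by (simp add: insert_commute)
    show ?thesis by (rule cfg_red_a[OF cfg_rot[OF cfg_rot[OF assms]] cC(1) cC(3) _ cn]) (use sub e in simp)
  qed
  then show "lattice_width C' \<noteq> lattice_width (convex hull {a, b, c})"
    using cfg_lwidth[OF assms] by simp
qed

lemma helper_t:
  assumes "0 \<le> t" "0 < (D::real)" "D * x = t * Y" "1 \<le> \<bar>Y\<bar>" "\<bar>x\<bar> \<le> 1" shows "t \<le> D"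
proof -
  have "t * 1 \<le> t * \<bar>Y\<bar>" using mult_left_mono[OF assms(4) assms(1)] .
  also have "\<dots> = \<bar>t * Y\<bar>" using assms(1) by (simp add: abs_mult)
  also have "\<dots> = D * \<bar>x\<bar>" using assms(2) by (simp flip: assms(3) add: abs_mult)
  also have "\<dots> \<le> D * 1" using mult_left_mono[OF assms(5)] assms(2) by simp
  finally show ?thesis by simp
qed

lemma cfg_ldiam:
  assumes "cfg a b c za zb zc l D"
  shows "lattice_diam (convex hull {a, b, c}) = D"
proof (rule antisym)
  note F = cfg_facts[OF assms]
  note E = cfg_e[OF assms]
  have d0: "det2 (b - a) (c - a) \<noteq> 0" by (rule cfg_Delta[OF assms])
  show "lattice_diam (convex hull {a, b, c}) \<le> D"
  proof (rule diam_le)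
    show "convex hull {a, b, c} \<noteq> {}" by simp
    fix p q z t assume h: "p \<in> convex hull {a, b, c}" "q \<in> convex hull {a, b, c}" "primitive_vec z"
      "0 \<le> t" "q - p = t *\<^sub>R z"
    obtain x y where p: "0 \<le> x" "0 \<le> y" "x + y \<le> 1" "p = a + x *\<^sub>R (b - a) + y *\<^sub>R (c - a)"
      using tri_coords[OF h(1)] by blast
    obtain x' y' where q: "0 \<le> x'" "0 \<le> y'" "x' + y' \<le> 1" "q = a + x' *\<^sub>R (b - a) + y' *\<^sub>R (c - a)"
      using tri_coords[OF h(2)] by blast
    obtain m n where mn: "m \<in> \<int>" "n \<in> \<int>" "z = m *\<^sub>R za + n *\<^sub>R zb"
      using int_coords[OF F(1,2,7) primitive_int[OF h(3)]] by blast
    have mn0: "m \<noteq> 0 \<or> n \<noteq> 0" using primitive_nonzero[OF h(3)] mn(3) by auto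
    have "(D * (x' - x)) *\<^sub>R (b - a) + (D * (y' - y)) *\<^sub>R (c - a) = D *\<^sub>R (q - p)"
      unfolding p(4) q(4) by (simp add: algebra_simps)
    also have "\<dots> = t *\<^sub>R (m *\<^sub>R (D *\<^sub>R za) + n *\<^sub>R (D *\<^sub>R zb))"
      using h(5) mn(3) by (simp add: algebra_simps)
    also have "\<dots> = t *\<^sub>R (m *\<^sub>R (l *\<^sub>R (b - a) + (1 - l) *\<^sub>R (c - a)) + n *\<^sub>R (l *\<^sub>R (c - a) - (b - a)))"
      using E by simp
    also have "\<dots> = (t * (m*l - n)) *\<^sub>R (b - a) + (t * (m*(1-l) + n*l)) *\<^sub>R (c - a)"
      by (simp add: prod_eq_iff algebra_simps)
    finally have c12: "D * (x' - x) = t * (m*l - n) \<and> D * (y' - y) = t * (m*(1-l) + n*l)"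
      by (rule coord_unique[OF d0])
    have c3: "D * ((x' + y') - (x + y)) = t * (m - n*(1-l))"
      using c12 by algebra
    from int_ineq2[OF mn(1,2) mn0 F(4,5)] show "t \<le> D"
    proof (elim disjE)
      assume "1 \<le> \<bar>m * l - n\<bar>"
      then show ?thesis using helper_t[OF h(4) F(6) conjunct1[OF c12]] p q by simp
    next
      assume "1 \<le> \<bar>m * (1 - l) + n * l\<bar>"
      then show ?thesis using helper_t[OF h(4) F(6) conjunct2[OF c12]] p q by simp
    next
      assume "1 \<le> \<bar>m - n * (1 - l)\<bar>"
      then show ?thesis using helper_t[OF h(4) F(6) c3] p q by simp
    qed
  qed
  have mem: "a + D *\<^sub>R za \<in> convex hull {a, b, c}"
    unfolding tri_mem using F(4,5)
    by (intro exI[of _ l] exI[of _ "1 - l"]) (simp add: E(1) add.assoc)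
  show "D \<le> lattice_diam (convex hull {a, b, c})"
    using diam_ge[OF hull3_bounded hull3_verts(1) mem za_primitive[OF F(1,2,7)]] F(6) by simp
qed

lemma cfg_beyond:
  assumes "cfg a b c za zb zc l D" "convex C" "bounded C" "convex hull {a, b, c} \<subseteq> C" "p \<in> C"
    "p = a + x *\<^sub>R (b - a) + y *\<^sub>R (c - a)" "1 < x + y"
  shows "D < lattice_diam C"
proof -
  note F = cfg_facts[OF assms(1)]
  note E = cfg_e[OF assms(1)]
  define \<delta> where "\<delta> = x + y - 1"
  have \<delta>: "0 < \<delta>" using assms(7) \<delta>_def by simp
  define A where "A = \<bar>\<delta>*l - x\<bar>"
  define B where "B = \<bar>\<delta>*l - x + 1\<bar>"
  define m0 where "m0 = min (1/2) (min l (1 - l))"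
  have m0: "0 < m0" "m0 \<le> 1/2" "m0 \<le> l" "m0 \<le> 1 - l" using F(4,5) unfolding m0_def by (auto simp: min_def)
  have AB: "0 \<le> A" "0 \<le> B" using A_def B_def by auto
  define \<theta> where "\<theta> = m0 / (1 + A + B)"
  have den: "0 < 1 + A + B" using AB by simp
  have th0: "0 < \<theta>" unfolding \<theta>_def using m0(1) den by simp
  have thm0: "\<theta> \<le> m0" unfolding \<theta>_def using m0(1) AB by (simp add: divide_le_eq)
  have thA: "\<theta> * A \<le> m0"
  proof -
    have "\<theta> * A = m0 * (A / (1 + A + B))" unfolding \<theta>_def by simp
    also have "A / (1 + A + B) \<le> 1" using AB den by (simp add: divide_le_eq)
    then have "m0 * (A / (1 + A + B)) \<le> m0 * 1" using m0(1) by (intro mult_left_mono) auto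
    finally show ?thesis by simp
  qed
  have thB: "\<theta> * B \<le> m0"
  proof -
    have "\<theta> * B = m0 * (B / (1 + A + B))" unfolding \<theta>_def by simp
    also have "B / (1 + A + B) \<le> 1" using AB den by (simp add: divide_le_eq)
    then have "m0 * (B / (1 + A + B)) \<le> m0 * 1" using m0(1) by (intro mult_left_mono) auto
    finally show ?thesis by simp
  qed
  have th1: "\<theta> < 1" using thm0 m0(2) by simp
  define N where "N = (1 + \<theta>*\<delta>)*l - \<theta>*x"
  define \<rho> where "\<rho> = N / (1 - \<theta>)"
  have N1: "N = l + \<theta> * (\<delta>*l - x)" unfolding N_def by (simp add: algebra_simps)
  have "- A \<le> \<delta>*l - x" unfolding A_def by simp
  then have "\<theta> * (- A) \<le> \<theta> * (\<delta>*l - x)" using th0 by (intro mult_left_mono) auto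
  then have N0: "0 \<le> N" unfolding N1 using thA m0(3) by simp
  have "\<delta>*l - x + 1 \<le> B" unfolding B_def by simp
  then have "\<theta> * (\<delta>*l - x + 1) \<le> \<theta> * B" using th0 by (intro mult_left_mono) auto
  then have Nle: "N \<le> 1 - \<theta>" unfolding N1 using thB m0(4) by (simp add: algebra_simps)
  have rho: "0 \<le> \<rho>" "\<rho> \<le> 1" unfolding \<rho>_def using N0 Nle th1 by (auto simp: divide_le_eq)
  define r where "r = a + \<rho> *\<^sub>R (b - a) + (1 - \<rho>) *\<^sub>R (c - a)"
  have rT: "r \<in> convex hull {a, b, c}" unfolding tri_mem r_def using rho
    by (intro exI[of _ \<rho>] exI[of _ "1 - \<rho>"]) simp
  define w where "w = (1 - \<theta>) *\<^sub>R r + \<theta> *\<^sub>R p"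
  have wC: "w \<in> C" unfolding w_def
    using convexD[OF assms(2), of r p "1 - \<theta>" \<theta>] rT assms(4,5) th0 th1 by auto
  have cu: "(1 - \<theta>) * \<rho> + \<theta> * x = (1 + \<theta>*\<delta>) * l"
    unfolding \<rho>_def N_def using th1 by (simp add: field_simps)
  have cv: "(1 - \<theta>) * (1 - \<rho>) + \<theta> * y = (1 + \<theta>*\<delta>) * (1 - l)"
    using cu unfolding \<delta>_def by algebra
  have "w - a = ((1 - \<theta>) * \<rho> + \<theta> * x) *\<^sub>R (b - a) + ((1 - \<theta>) * (1 - \<rho>) + \<theta> * y) *\<^sub>R (c - a)"
    unfolding w_def r_def assms(6) by (simp add: prod_eq_iff algebra_simps)
  also have "\<dots> = (1 + \<theta>*\<delta>) *\<^sub>R (l *\<^sub>R (b - a) + (1 - l) *\<^sub>R (c - a))"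
    unfolding cu cv by (simp add: algebra_simps)
  also have "\<dots> = ((1 + \<theta>*\<delta>) * D) *\<^sub>R za" unfolding E(1)[symmetric] by simp
  finally have wa: "w - a = ((1 + \<theta>*\<delta>) * D) *\<^sub>R za" .
  have aC: "a \<in> C" using assms(4) hull3_verts(1) by blast
  have tpos: "0 \<le> (1 + \<theta>*\<delta>) * D" using th0 \<delta> F(6) by simp
  have "(1 + \<theta>*\<delta>) * D \<le> lattice_diam C"
    by (rule diam_ge[OF assms(3) aC wC za_primitive[OF F(1,2,7)] tpos wa])
  moreover have "D < (1 + \<theta>*\<delta>) * D" using th0 \<delta> F(6) by simp
  ultimately show ?thesis by linarith
qed

lemma cfg_complete:
  assumes "cfg a b c za zb zc l D"
  shows "lattice_complete (convex hull {a, b, c})"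
  unfolding lattice_complete_def
proof (intro conjI allI impI)
  show "convex_body (convex hull {a, b, c})" by (rule cfg_convex_body[OF assms])
  fix C assume h: "convex_body C \<and> convex hull {a, b, c} \<subset> C"
  have cC: "convex C" "bounded C" using h compact_imp_bounded unfolding convex_body_def by auto
  have sub: "convex hull {a, b, c} \<subseteq> C" using h by auto
  obtain p where p: "p \<in> C" "p \<notin> convex hull {a, b, c}" using h by auto
  have d0: "det2 (b - a) (c - a) \<noteq> 0" by (rule cfg_Delta[OF assms])
  define x where "x = det2 (p - a) (c - a) / det2 (b - a) (c - a)"
  define y where "y = det2 (b - a) (p - a) / det2 (b - a) (c - a)"
  have "p - a = x *\<^sub>R (b - a) + y *\<^sub>R (c - a)"
    using coord_exists[OF d0, of "p - a"] unfolding x_def y_def .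
  then have pe: "p = a + x *\<^sub>R (b - a) + y *\<^sub>R (c - a)" by (simp add: algebra_simps)
  have nt: "\<not> (0 \<le> x \<and> 0 \<le> y \<and> x + y \<le> 1)" using p(2) pe tri_mem by blast
  have "D < lattice_diam C"
  proof (cases "1 < x + y")
    case True then show ?thesis by (rule cfg_beyond[OF assms cC sub p(1) pe])
  next
    case False
    then have xy: "x < 0 \<or> y < 0" using nt by linarith
    show ?thesis
    proof (cases "x < 0")
      case True
      have sub': "convex hull {b, c, a} \<subseteq> C" using sub by (simp add: insert_commute)
      have pe': "p = b + y *\<^sub>R (c - b) + (1 - x - y) *\<^sub>R (a - b)"
        unfolding pe by (simp add: prod_eq_iff algebra_simps)
      show ?thesis by (rule cfg_beyond[OF cfg_rot[OF assms] cC sub' p(1) pe']) (use True in simp)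
    next
      case False
      then have yn: "y < 0" using xy by simp
      have sub': "convex hull {c, a, b} \<subseteq> C" using sub by (simp add: insert_commute)
      have pe': "p = c + (1 - x - y) *\<^sub>R (a - c) + x *\<^sub>R (b - c)"
        unfolding pe by (simp add: prod_eq_iff algebra_simps)
      show ?thesis by (rule cfg_beyond[OF cfg_rot[OF cfg_rot[OF assms]] cC sub' p(1) pe']) (use yn in simp)
    qed
  qed
  then show "lattice_diam C \<noteq> lattice_diam (convex hull {a, b, c})"
    using cfg_ldiam[OF assms] by simp
qed

lemma unimod_lin: "linear (\<lambda>z. r *\<^sub>R unimod_map a b c d z)"
  unfolding Real_Vector_Spaces.linear_iff unimod_map_def by (auto simp: algebra_simps)

lemma unimod_pair: "unimod_map a0 b0 c0 d0 (p, q) = p *\<^sub>R (of_int a0, of_int c0) + q *\<^sub>R (of_int b0, of_int d0)"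
  by (simp add: unimod_map_def prod_eq_iff algebra_simps)

lemma affine_hull3:
  "(\<lambda>z. r *\<^sub>R unimod_map a b c d z + t) ` (convex hull {A, B, C}) =
   convex hull {r *\<^sub>R unimod_map a b c d A + t, r *\<^sub>R unimod_map a b c d B + t, r *\<^sub>R unimod_map a b c d C + t}"
proof -
  let ?L = "\<lambda>z. r *\<^sub>R unimod_map a b c d z"
  have "(\<lambda>z. ?L z + t) ` (convex hull {A, B, C}) = (\<lambda>z. t + z) ` (?L ` (convex hull {A, B, C}))"
    by (auto simp: image_image add.commute)
  also have "\<dots> = (\<lambda>z. t + z) ` (convex hull (?L ` {A, B, C}))"
    by (simp add: convex_hull_linear_image[OF unimod_lin])
  also have "\<dots> = convex hull ((\<lambda>z. t + z) ` ?L ` {A, B, C})"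
    by (rule convex_hull_translation[symmetric])
  also have "\<dots> = convex hull {?L A + t, ?L B + t, ?L C + t}" by (simp add: add.commute)
  finally show ?thesis .
qed

lemma equiv_cfg:
  assumes "0 \<le> x" "x < 1" "lattice_equiv (T_tri x) T"
  shows "\<exists>a b c za zb zc l D. cfg a b c za zb zc l D \<and> T = convex hull {a, b, c}"
proof -
  obtain r a0 b0 c0 d0 t where h: "r > 0" "\<bar>a0 * d0 - b0 * c0\<bar> = 1"
    "T = (\<lambda>z. r *\<^sub>R unimod_map a0 b0 c0 d0 z + t) ` T_tri x"
    using assms(3) unfolding lattice_equiv_def by blast
  let ?f = "\<lambda>z. r *\<^sub>R unimod_map a0 b0 c0 d0 z + t"
  define za :: "real \<times> real" where "za = (of_int (a0 + b0), of_int (c0 + d0))"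
  define zb :: "real \<times> real" where "zb = (of_int (- b0), of_int (- d0))"
  define zc :: "real \<times> real" where "zc = (of_int (- a0), of_int (- c0))"
  define l where "l = (1 + x) / 2"
  define D where "D = r * (3 + x*x) / 2"
  have T: "T = convex hull {?f (-1, -1), ?f (x, 1), ?f (1, -x)}"
    unfolding h(3) T_tri_def affine_hull3 ..
  have det: "det2 za zb = 1 \<or> det2 za zb = -1"
  proof -
    have e: "det2 za zb = - real_of_int (a0 * d0 - b0 * c0)"
      unfolding za_def zb_def det2_def by (simp add: algebra_simps)
    have "a0 * d0 - b0 * c0 = 1 \<or> a0 * d0 - b0 * c0 = -1" using h(2) by linarith
    then show ?thesis
    proof (elim disjE)
      assume h1: "a0 * d0 - b0 * c0 = 1" show ?thesis unfolding e h1 by simp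
    next
      assume h1: "a0 * d0 - b0 * c0 = -1" show ?thesis unfolding e h1 by simp
    qed
  qed
  have "cfg (?f (-1, -1)) (?f (x, 1)) (?f (1, -x)) za zb zc l D"
    unfolding cfg_def
  proof (intro conjI)
    show "int_vec za" "int_vec zb" "int_vec zc" unfolding za_def zb_def zc_def int_vec_def by auto
    show "za + zb + zc = 0" unfolding za_def zb_def zc_def by (simp add: zero_prod_def)
    show "det2 za zb = 1 \<or> det2 za zb = -1" by (rule det)
    show "0 < l" "l < 1" unfolding l_def using assms by auto
    show "0 < D" unfolding D_def using h(1) by (simp add: add_pos_nonneg)
    show "?f (-1, -1) + D *\<^sub>R za = l *\<^sub>R ?f (x, 1) + (1 - l) *\<^sub>R ?f (1, -x)"
      unfolding za_def l_def D_def unimod_map_def by (simp add: prod_eq_iff field_simps, (simp add: algebra_simps)?)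
    show "?f (x, 1) + D *\<^sub>R zb = l *\<^sub>R ?f (1, -x) + (1 - l) *\<^sub>R ?f (-1, -1)"
      unfolding zb_def l_def D_def unimod_map_def by (simp add: prod_eq_iff field_simps, (simp add: algebra_simps)?)
    show "?f (1, -x) + D *\<^sub>R zc = l *\<^sub>R ?f (-1, -1) + (1 - l) *\<^sub>R ?f (x, 1)"
      unfolding zc_def l_def D_def unimod_map_def by (simp add: prod_eq_iff field_simps, (simp add: algebra_simps)?)
  qed
  then show ?thesis using T by blast
qed

lemma cfg_equiv_half:
  assumes "cfg a b c za zb zc l D" "1/2 \<le> l"
  shows "\<exists>x. 0 \<le> x \<and> x < 1 \<and> lattice_equiv (T_tri x) (convex hull {a, b, c})"
proof -
  note F = cfg_facts[OF assms(1)]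
  obtain i1 i2 where za: "za = (of_int i1, of_int i2)" using F(1) int_vec_iff by blast
  obtain j1 j2 where zb: "zb = (of_int j1, of_int j2)" using F(2) int_vec_iff by blast
  define k where "k = l*l - l + 1"
  have k: "0 < k" unfolding k_def by (rule kappa_pos)
  define x where "x = 2 * l - 1"
  define r where "r = D / (2 * k)"
  define a0 where "a0 = i1 + j1"
  define b0 where "b0 = - j1"
  define c0 where "c0 = i2 + j2"
  define d0 where "d0 = - j2"
  define t where "t = a + r *\<^sub>R za"
  let ?f = "\<lambda>z. r *\<^sub>R unimod_map a0 b0 c0 d0 z + t"
  have r: "0 < r" unfolding r_def using F(6) k by simp
  have "of_int (i1 * j2 - i2 * j1) = det2 za zb" unfolding za zb det2_def by simp
  then have "i1 * j2 - i2 * j1 = 1 \<or> i1 * j2 - i2 * j1 = -1" using F(7)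
    by (metis of_int_eq_1_iff of_int_eq_iff of_int_minus of_int_1)
  then have det: "\<bar>a0 * d0 - b0 * c0\<bar> = 1" unfolding a0_def b0_def c0_def d0_def
    by (auto simp: algebra_simps)
  have col1: "(of_int a0, of_int c0) = za + zb" unfolding a0_def c0_def za zb by simp
  have col2: "(of_int b0, of_int d0) = - zb" unfolding b0_def d0_def zb by simp
  have U: "unimod_map a0 b0 c0 d0 (p, q) = p *\<^sub>R (za + zb) - q *\<^sub>R zb" for p q
    unfolding unimod_pair col1 col2 by simp
  have uv1: "b - a = (D / k) *\<^sub>R (l *\<^sub>R za + (l - 1) *\<^sub>R zb)"
  proof -
    have "k *\<^sub>R (b - a) = D *\<^sub>R (l *\<^sub>R za + (l - 1) *\<^sub>R zb)" using cfg_uv(1)[OF assms(1)] unfolding k_def .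
    then have "(1/k) *\<^sub>R (k *\<^sub>R (b - a)) = (1/k) *\<^sub>R (D *\<^sub>R (l *\<^sub>R za + (l - 1) *\<^sub>R zb))" by simp
    then show ?thesis using k by simp
  qed
  have uv2: "c - a = (D / k) *\<^sub>R (za + l *\<^sub>R zb)"
  proof -
    have "k *\<^sub>R (c - a) = D *\<^sub>R (za + l *\<^sub>R zb)" using cfg_uv(2)[OF assms(1)] unfolding k_def .
    then have "(1/k) *\<^sub>R (k *\<^sub>R (c - a)) = (1/k) *\<^sub>R (D *\<^sub>R (za + l *\<^sub>R zb))" by simp
    then show ?thesis using k by simp
  qed
  have fA: "?f (-1, -1) = a" unfolding U t_def by (simp add: prod_eq_iff algebra_simps)
  have fB: "?f (x, 1) = b"
  proof -
    have "?f (x, 1) = a + r *\<^sub>R ((x + 1) *\<^sub>R za + (x - 1) *\<^sub>R zb)" unfolding U t_def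
      by (simp add: prod_eq_iff algebra_simps)
    also have "\<dots> = a + (D / k) *\<^sub>R (l *\<^sub>R za + (l - 1) *\<^sub>R zb)"
      unfolding r_def x_def using k by (simp add: prod_eq_iff field_simps)
    also have "\<dots> = b" using uv1 by (simp add: algebra_simps)
    finally show ?thesis .
  qed
  have fC: "?f (1, -x) = c"
  proof -
    have "?f (1, -x) = a + r *\<^sub>R (2 *\<^sub>R za + (1 + x) *\<^sub>R zb)" unfolding U t_def
      by (simp add: prod_eq_iff algebra_simps)
    also have "\<dots> = a + (D / k) *\<^sub>R (za + l *\<^sub>R zb)"
      unfolding r_def x_def using k by (simp add: prod_eq_iff field_simps)
    also have "\<dots> = c" using uv2 by (simp add: algebra_simps)
    finally show ?thesis .
  qed
  have "?f ` T_tri x = convex hull {a, b, c}"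
    unfolding T_tri_def affine_hull3 fA fB fC ..
  then have "lattice_equiv (T_tri x) (convex hull {a, b, c})"
    unfolding lattice_equiv_def using r det by blast
  moreover have "0 \<le> x" "x < 1" unfolding x_def using assms(2) F(5) by auto
  ultimately show ?thesis by blast
qed

lemma cfg_equiv:
  assumes "cfg a b c za zb zc l D"
  shows "\<exists>x. 0 \<le> x \<and> x < 1 \<and> lattice_equiv (T_tri x) (convex hull {a, b, c})"
proof (cases "1/2 \<le> l")
  case True then show ?thesis by (rule cfg_equiv_half[OF assms])
next
  case False
  have "\<exists>x. 0 \<le> x \<and> x < 1 \<and> lattice_equiv (T_tri x) (convex hull {a, c, b})"
    by (rule cfg_equiv_half[OF cfg_rev[OF assms]]) (use False in simp)
  moreover have "convex hull {a, c, b} = convex hull {a, b, c}" by (simp add: insert_commute)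
  ultimately show ?thesis by simp
qed

lemma noncollinear_det:
  assumes "\<not> collinear {a, b, c}"
  shows "det2 (b - a) (c - a) \<noteq> 0"
proof
  assume d: "det2 (b - a) (c - a) = 0"
  define p where "p = a - b"
  define q where "q = c - b"
  have dpq: "det2 p q = 0" using d unfolding p_def q_def det2_def by (simp add: algebra_simps)
  have "p = 0 \<or> q = 0 \<or> (\<exists>k. q = k *\<^sub>R p)"
  proof (cases "p = 0")
    case False
    then have pp: "p \<bullet> p \<noteq> 0" by simp
    have eq: "(p \<bullet> p) *\<^sub>R q = (p \<bullet> q) *\<^sub>R p"
      using dpq unfolding det2_def by (simp add: prod_eq_iff inner_prod_def algebra_simps, algebra?)
    have "q = (1 / (p \<bullet> p)) *\<^sub>R ((p \<bullet> p) *\<^sub>R q)" using pp by simp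
    also have "\<dots> = (1 / (p \<bullet> p)) *\<^sub>R ((p \<bullet> q) *\<^sub>R p)" unfolding eq ..
    also have "\<dots> = ((p \<bullet> q) / (p \<bullet> p)) *\<^sub>R p" by simp
    finally have "q = ((p \<bullet> q) / (p \<bullet> p)) *\<^sub>R p" .
    then show ?thesis by blast
  qed simp
  then have "collinear {0, p, q}" by (simp add: collinear_lemma)
  moreover have "collinear {a, b, c} \<longleftrightarrow> collinear {0, p, q}"
    unfolding p_def q_def using collinear_3[of a b c] by (simp add: NO_MATCH_def)
  ultimately have "collinear {a, b, c}" by simp
  then show False using assms by simp
qed

lemma finite_box: "finite {z. int_vec z \<and> \<bar>fst z\<bar> \<le> M \<and> \<bar>snd z\<bar> \<le> M}"
proof -
  define N where "N = \<lceil>M\<rceil>"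
  have "{z. int_vec z \<and> \<bar>fst z\<bar> \<le> M \<and> \<bar>snd z\<bar> \<le> M} \<subseteq>
        (\<lambda>(i, j). (real_of_int i, real_of_int j)) ` ({-N..N} \<times> {-N..N})"
  proof
    fix z assume "z \<in> {z. int_vec z \<and> \<bar>fst z\<bar> \<le> M \<and> \<bar>snd z\<bar> \<le> M}"
    then have h: "int_vec z" "\<bar>fst z\<bar> \<le> M" "\<bar>snd z\<bar> \<le> M" by auto
    obtain i j where z: "z = (of_int i, of_int j)" using h(1) int_vec_iff by blast
    have "\<bar>real_of_int i\<bar> \<le> M" "\<bar>real_of_int j\<bar> \<le> M" using h z by auto
    then have "\<bar>i\<bar> \<le> N" "\<bar>j\<bar> \<le> N" unfolding N_def by (simp_all add: le_ceiling_iff)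
    then have "(i, j) \<in> {-N..N} \<times> {-N..N}" by auto
    then show "z \<in> (\<lambda>(i, j). (real_of_int i, real_of_int j)) ` ({-N..N} \<times> {-N..N})"
      unfolding z by force
  qed
  then show ?thesis by (rule finite_subset) simp
qed

lemma chord_L1:
  assumes "int_vec z" "z \<noteq> 0" "z = x *\<^sub>R (b - a) + y *\<^sub>R (c - a)"
  shows "1 \<le> lattice_diam (convex hull {a, b, c}) * max \<bar>x\<bar> (max \<bar>y\<bar> \<bar>x + y\<bar>)"
proof -
  define N where "N = max \<bar>x\<bar> (max \<bar>y\<bar> \<bar>x + y\<bar>)"
  have N0: "0 \<le> N" unfolding N_def by simp
  have Nn: "N \<noteq> 0"
  proof
    assume "N = 0" then have "x = 0" "y = 0" unfolding N_def by auto
    then show False using assms(2,3) by simp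
  qed
  then have Np: "0 < N" using N0 by simp
  have bx: "\<bar>x\<bar> \<le> N" "\<bar>y\<bar> \<le> N" "\<bar>x + y\<bar> \<le> N" unfolding N_def by auto
  define p where "p = a + (max (-x) 0 / N) *\<^sub>R (b - a) + (max (-y) 0 / N) *\<^sub>R (c - a)"
  define q where "q = a + (max x 0 / N) *\<^sub>R (b - a) + (max y 0 / N) *\<^sub>R (c - a)"
  have s1: "max (-x) 0 + max (-y) 0 \<le> N" using bx by (auto simp: max_def)
  have s2: "max x 0 + max y 0 \<le> N" using bx by (auto simp: max_def)
  have frac_ok: "0 \<le> P / N \<and> 0 \<le> Q / N \<and> P / N + Q / N \<le> 1"
    if "0 \<le> P" "0 \<le> Q" "P + Q \<le> N" for P Q
  proof -
    have "P / N + Q / N = (P + Q) / N" by (simp add: add_divide_distrib)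
    also have "\<dots> \<le> 1" using that(3) Np by simp
    finally show ?thesis using that(1,2) Np by simp
  qed
  have pT: "p \<in> convex hull {a, b, c}"
  proof -
    have f: "0 \<le> max (-x) 0 / N \<and> 0 \<le> max (-y) 0 / N \<and> max (-x) 0 / N + max (-y) 0 / N \<le> 1"
      using frac_ok[of "max (-x) 0" "max (-y) 0"] s1 by simp
    show ?thesis unfolding tri_mem p_def using f by blast
  qed
  have qT: "q \<in> convex hull {a, b, c}"
  proof -
    have f: "0 \<le> max x 0 / N \<and> 0 \<le> max y 0 / N \<and> max x 0 / N + max y 0 / N \<le> 1"
      using frac_ok[of "max x 0" "max y 0"] s2 by simp
    show ?thesis unfolding tri_mem q_def using f by blast
  qed
  have "q - p = (1 / N) *\<^sub>R z"
  proof -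
    have mx: "max x 0 - max (-x) 0 = x" "max y 0 - max (-y) 0 = y" by (auto simp: max_def)
    have "q - p = ((max x 0 - max (-x) 0) / N) *\<^sub>R (b - a) + ((max y 0 - max (-y) 0) / N) *\<^sub>R (c - a)"
      unfolding p_def q_def by (simp add: algebra_simps diff_divide_distrib)
    also have "\<dots> = (1 / N) *\<^sub>R z" unfolding mx assms(3) by (simp add: algebra_simps)
    finally show ?thesis .
  qed
  obtain g w where gw: "g \<ge> 1" "primitive_vec w" "z = g *\<^sub>R w" using int_decomp[OF assms(1,2)] by blast
  have "q - p = (g / N) *\<^sub>R w" using \<open>q - p = (1 / N) *\<^sub>R z\<close> gw(3) by simp
  then have "g / N \<le> lattice_diam (convex hull {a, b, c})"
    using diam_ge[OF hull3_bounded pT qT gw(2)] gw(1) Np by simp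
  moreover have "1 / N \<le> g / N" using gw(1) Np by (simp add: divide_right_mono)
  ultimately have "1 / N \<le> lattice_diam (convex hull {a, b, c})" by linarith
  then have "1 \<le> lattice_diam (convex hull {a, b, c}) * N" using Np by (simp add: divide_le_eq)
  then show ?thesis unfolding N_def .
qed

lemma diam_pos:
  assumes "det2 (b - a) (c - a) \<noteq> 0"
  shows "0 < lattice_diam (convex hull {a, b, c})"
proof -
  define z :: "real \<times> real" where "z = (1, 0)"
  have zi: "int_vec z" "z \<noteq> 0" unfolding z_def int_vec_def by (auto simp: zero_prod_def)
  have "z = (det2 z (c - a) / det2 (b - a) (c - a)) *\<^sub>R (b - a) + (det2 (b - a) z / det2 (b - a) (c - a)) *\<^sub>R (c - a)"
    by (rule coord_exists[OF assms])
  from chord_L1[OF zi this] obtain M where M: "1 \<le> lattice_diam (convex hull {a, b, c}) * M" "0 \<le> M"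
    by (meson abs_ge_zero max.coboundedI1)
  show ?thesis
  proof (rule ccontr)
    assume "\<not> 0 < lattice_diam (convex hull {a, b, c})"
    then have "lattice_diam (convex hull {a, b, c}) * M \<le> 0" using M(2) by (simp add: mult_nonpos_nonneg)
    then show False using M(1) by linarith
  qed
qed

lemma hull4_coords:
  assumes "w \<in> convex hull (insert p {a, b, c})" "p = a + s *\<^sub>R (b - a) + s *\<^sub>R (c - a)"
    "1/2 \<le> s" "s \<le> 1"
  obtains x y where "w = a + x *\<^sub>R (b - a) + y *\<^sub>R (c - a)" "0 \<le> x" "x \<le> 1" "0 \<le> y" "y \<le> 1"
    "0 \<le> s*x + (1-s)*y" "s*x + (1-s)*y \<le> s" "0 \<le> (1-s)*x + s*y" "(1-s)*x + s*y \<le> s"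
proof -
  have ne: "{a, b, c} \<noteq> {}" by simp
  obtain mA mB w0 where h: "0 \<le> mA" "0 \<le> mB" "mA + mB = 1" "w0 \<in> convex hull {a, b, c}"
    "w = mA *\<^sub>R p + mB *\<^sub>R w0"
    using assms(1) unfolding convex_hull_insert[OF ne] by blast
  obtain x0 y0 where c0: "0 \<le> x0" "0 \<le> y0" "x0 + y0 \<le> 1" "w0 = a + x0 *\<^sub>R (b - a) + y0 *\<^sub>R (c - a)"
    using tri_coords[OF h(4)] by blast
  define x where "x = mA* s + mB*x0"
  define y where "y = mA* s + mB*y0"
  have nu: "mB = 1 - mA" using h(3) by simp
  have we: "w = a + x *\<^sub>R (b - a) + y *\<^sub>R (c - a)"
    unfolding h(5) assms(2) c0(4) x_def y_def nu by (simp add: prod_eq_iff algebra_simps)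
  have x0y0: "x0 \<le> 1" "y0 \<le> 1" using c0 by linarith+
  have A1: "mA* s \<le> mA" using h(1) assms(4) by (simp add: mult_left_le)
  have A2: "mB*x0 \<le> mB" "mB*y0 \<le> mB" using h(2) x0y0 by (simp_all add: mult_left_le)
  have P: "0 \<le> mA* s" "0 \<le> mB*x0" "0 \<le> mB*y0" using h(1,2) c0(1,2) assms(3) by simp_all
  have B1: "s*x0 + (1-s)*y0 \<le> s"
  proof -
    have "(1-s)*y0 \<le> s*y0" using c0(2) assms(3) by (intro mult_right_mono) auto
    moreover have "s*(x0 + y0) \<le> s" using c0(3) assms(3) by (simp add: mult_left_le)
    ultimately show ?thesis by (simp add: algebra_simps)
  qed
  have B2: "(1-s)*x0 + s*y0 \<le> s"
  proof -
    have "(1-s)*x0 \<le> s*x0" using c0(1) assms(3) by (intro mult_right_mono) auto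
    moreover have "s*(x0 + y0) \<le> s" using c0(3) assms(3) by (simp add: mult_left_le)
    ultimately show ?thesis by (simp add: algebra_simps)
  qed
  have B0: "0 \<le> s*x0 + (1-s)*y0" "0 \<le> (1-s)*x0 + s*y0" using c0(1,2) assms(3,4) by simp_all
  have E1: "s*x + (1-s)*y = mA* s + mB*(s*x0 + (1-s)*y0)" unfolding x_def y_def by (simp add: algebra_simps)
  have E2: "(1-s)*x + s*y = mA* s + mB*((1-s)*x0 + s*y0)" unfolding x_def y_def by (simp add: algebra_simps)
  have F1: "mB*(s*x0 + (1-s)*y0) \<le> mB* s" using B1 h(2) by (rule mult_left_mono)
  have F2: "mB*((1-s)*x0 + s*y0) \<le> mB* s" using B2 h(2) by (rule mult_left_mono)
  have G: "0 \<le> mB*(s*x0 + (1-s)*y0)" "0 \<le> mB*((1-s)*x0 + s*y0)" using B0 h(2) by simp_all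
  have mns: "mA* s + mB* s = s" using h(3) by (simp add: algebra_simps flip: distrib_right)
  show ?thesis
  proof (rule that[OF we])
    show "0 \<le> x" "x \<le> 1" "0 \<le> y" "y \<le> 1" unfolding x_def y_def using A1 A2 P h(3) by linarith+
    show "0 \<le> s*x + (1-s)*y" "s*x + (1-s)*y \<le> s" unfolding E1 using F1 G P mns by linarith+
    show "0 \<le> (1-s)*x + s*y" "(1-s)*x + s*y \<le> s" unfolding E2 using F2 G P mns by linarith+
  qed
qed

lemma strict_helper:
  assumes "0 < (D::real)" "D < t" "t * \<bar>X\<bar> \<le> c" "0 < c"
  shows "D * \<bar>X\<bar> < c"
proof (cases "X = 0")
  case True then show ?thesis using assms(4) by simp
next
  case False
  then have "D * \<bar>X\<bar> < t * \<bar>X\<bar>" using assms(2) by simp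
  then show ?thesis using assms(3) by linarith
qed

lemma vertex_cevian:
  assumes "\<not> collinear {a, b, c}" "lattice_complete (convex hull {a, b, c})"
  shows "\<exists>z l. int_vec z \<and> 0 < l \<and> l < 1 \<and>
           a + lattice_diam (convex hull {a, b, c}) *\<^sub>R z = l *\<^sub>R b + (1 - l) *\<^sub>R c"
proof (rule ccontr)
  assume H: "\<not> ?thesis"
  define T where "T = convex hull {a, b, c}"
  define D where "D = lattice_diam T"
  define u where "u = b - a"
  define v where "v = c - a"
  define \<Delta> where "\<Delta> = det2 u v"
  have d0: "\<Delta> \<noteq> 0" using noncollinear_det[OF assms(1)] unfolding \<Delta>_def u_def v_def .
  have Dp: "0 < D" using diam_pos noncollinear_det[OF assms(1)] unfolding D_def T_def by blast
  define ca where "ca z = det2 z v / \<Delta>" for z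
  define cb where "cb z = det2 u z / \<Delta>" for z
  have cz: "z = ca z *\<^sub>R u + cb z *\<^sub>R v" for z
    using coord_exists[OF d0[unfolded \<Delta>_def]] unfolding ca_def cb_def \<Delta>_def .
  have H': "D * (ca z + cb z) \<noteq> 1" if z: "int_vec z" "0 < ca z" "0 < cb z" for z
  proof
    assume z1: "D * (ca z + cb z) = 1"
    define l where "l = D * ca z"
    have l1: "1 - l = D * cb z" using z1 unfolding l_def by (simp add: algebra_simps)
    have pp: "0 < D * ca z" "0 < D * cb z" using Dp z(2,3) by simp_all
    have l: "0 < l" "l < 1" using pp l1 unfolding l_def by linarith+
    have "D *\<^sub>R z = D *\<^sub>R (ca z *\<^sub>R u + cb z *\<^sub>R v)" by (rule arg_cong[OF cz])
    then have "a + D *\<^sub>R z = a + (D * ca z) *\<^sub>R u + (D * cb z) *\<^sub>R v"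
      by (simp add: algebra_simps)
    also have "\<dots> = l *\<^sub>R b + (1 - l) *\<^sub>R c" unfolding l1[symmetric] l_def[symmetric] u_def v_def
      by (simp add: algebra_simps)
    finally show False using H z(1) l unfolding D_def T_def by blast
  qed
  define M where "M = (\<bar>fst u\<bar> + \<bar>fst v\<bar> + \<bar>snd u\<bar> + \<bar>snd v\<bar>) / D"
  define F where "F = {z. int_vec z \<and> D * \<bar>ca z\<bar> \<le> 1 \<and> D * \<bar>cb z\<bar> \<le> 1}"
  have "F \<subseteq> {z. int_vec z \<and> \<bar>fst z\<bar> \<le> M \<and> \<bar>snd z\<bar> \<le> M}"
  proof
    fix z assume "z \<in> F"
    then have h: "int_vec z" "D * \<bar>ca z\<bar> \<le> 1" "D * \<bar>cb z\<bar> \<le> 1" unfolding F_def by auto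
    have h2: "\<bar>ca z\<bar> \<le> 1 / D" "\<bar>cb z\<bar> \<le> 1 / D" using h(2,3) Dp by (simp_all add: le_divide_eq mult.commute)
    have c1: "fst z = ca z * fst u + cb z * fst v" "snd z = ca z * snd u + cb z * snd v"
      using arg_cong[OF cz[of z], of fst] arg_cong[OF cz[of z], of snd] by simp_all
    have k1: "\<bar>ca z * fst u\<bar> \<le> (1 / D) * \<bar>fst u\<bar>" "\<bar>cb z * fst v\<bar> \<le> (1 / D) * \<bar>fst v\<bar>"
      "\<bar>ca z * snd u\<bar> \<le> (1 / D) * \<bar>snd u\<bar>" "\<bar>cb z * snd v\<bar> \<le> (1 / D) * \<bar>snd v\<bar>"
      unfolding abs_mult by (rule mult_right_mono[OF h2(1)] mult_right_mono[OF h2(2)], simp)+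
    have M1: "M = (1 / D) * \<bar>fst u\<bar> + (1 / D) * \<bar>fst v\<bar> + (1 / D) * \<bar>snd u\<bar> + (1 / D) * \<bar>snd v\<bar>"
      unfolding M_def by (simp add: add_divide_distrib)
    have p0: "0 \<le> (1 / D) * \<bar>fst u\<bar>" "0 \<le> (1 / D) * \<bar>fst v\<bar>" "0 \<le> (1 / D) * \<bar>snd u\<bar>"
      "0 \<le> (1 / D) * \<bar>snd v\<bar>" using Dp by simp_all
    have "\<bar>fst z\<bar> \<le> M" unfolding c1 M1 using k1 p0 abs_triangle_ineq[of "ca z * fst u" "cb z * fst v"] by linarith
    moreover have "\<bar>snd z\<bar> \<le> M" unfolding c1 M1 using k1 p0 abs_triangle_ineq[of "ca z * snd u" "cb z * snd v"] by linarith
    ultimately show "z \<in> {z. int_vec z \<and> \<bar>fst z\<bar> \<le> M \<and> \<bar>snd z\<bar> \<le> M}" using h(1) by simp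
  qed
  then have finF: "finite F" using finite_box finite_subset by blast
  define G where "G = {z \<in> F. 0 < ca z \<and> 0 < cb z \<and> 1 < D * (ca z + cb z)}"
  have finG: "finite G" unfolding G_def using finF by simp
  define \<delta> where "\<delta> = (if G = {} then 1 else Min ((\<lambda>z. D * (ca z + cb z) - 1) ` G))"
  have \<delta>le: "\<delta> \<le> D * (ca z + cb z) - 1" if "z \<in> G" for z
  proof -
    have "G \<noteq> {}" using that by blast
    then have "\<delta> = Min ((\<lambda>z. D * (ca z + cb z) - 1) ` G)" unfolding \<delta>_def by simp
    also have "\<dots> \<le> D * (ca z + cb z) - 1" using finG that by (intro Min_le) auto
    finally show ?thesis .
  qed
  have \<delta>p: "0 < \<delta>"
  proof (cases "G = {}")
    case True then show ?thesis unfolding \<delta>_def by simp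
  next
    case False
    then have "\<delta> \<in> (\<lambda>z. D * (ca z + cb z) - 1) ` G" unfolding \<delta>_def using finG by simp
    then show ?thesis unfolding G_def by auto
  qed
  define md where "md = min \<delta> (1/2)"
  define s where "s = (1 + md) / 2"
  have mm: "0 < md" "md \<le> 1/2" "md \<le> \<delta>" unfolding md_def using \<delta>p by (auto simp: min_def)
  have s_1: "1/2 < s" unfolding s_def using mm(1) by simp
  have s_2: "s \<le> 3/4" unfolding s_def using mm(2) by simp
  have s_3: "2 * s - 1 \<le> \<delta>" unfolding s_def using mm(3) by (simp add: field_simps)
  note s = s_1 s_2 s_3
  define p where "p = a + s *\<^sub>R u + s *\<^sub>R v"
  define T' where "T' = convex hull (insert p {a, b, c})"
  have sub: "T \<subseteq> T'" unfolding T_def T'_def by (rule hull_mono) auto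
  have pT': "p \<in> T'" unfolding T'_def by (rule hull_inc) simp
  have pT: "p \<notin> T"
  proof
    assume "p \<in> T"
    then obtain x y where xy: "0 \<le> x" "0 \<le> y" "x + y \<le> 1" "p = a + x *\<^sub>R u + y *\<^sub>R v"
      using tri_coords unfolding T_def u_def v_def by metis
    have "s *\<^sub>R u + s *\<^sub>R v = x *\<^sub>R u + y *\<^sub>R v" using xy(4) unfolding p_def by simp
    then have "s = x \<and> s = y" using coord_unique[OF d0[unfolded \<Delta>_def]] by blast
    then show False using xy(3) s(1) by simp
  qed
  have cbT: "convex_body T" using assms(2) unfolding lattice_complete_def T_def by simp
  have bT': "bounded T'" unfolding T'_def by (intro compact_imp_bounded finite_imp_compact_convex_hull) simp
  have cbT': "convex_body T'" unfolding convex_body_def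
  proof (intro conjI)
    show "compact T'" unfolding T'_def by (intro finite_imp_compact_convex_hull) simp
    show "convex T'" unfolding T'_def by (rule convex_convex_hull)
    show "interior T' \<noteq> {}" using interior_mono[OF sub] cbT unfolding convex_body_def by blast
  qed
  have "T \<subset> T'" using sub pT pT' by blast
  then have neq: "lattice_diam T' \<noteq> D"
    using assms(2) cbT' unfolding lattice_complete_def D_def T_def by blast
  have "D \<le> lattice_diam T'" unfolding D_def by (rule diam_mono[OF sub _ bT']) (simp add: T_def)
  then have gt: "D < lattice_diam T'" using neq by simp
  have T'ne: "T' \<noteq> {}" using pT' by blast
  obtain x' y' z t where ch: "x' \<in> T'" "y' \<in> T'" "primitive_vec z" "0 \<le> t" "y' - x' = t *\<^sub>R z" "D < t"
    using diam_gtE[OF bT' T'ne gt] by blast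
  have pe: "p = a + s *\<^sub>R (b - a) + s *\<^sub>R (c - a)" unfolding p_def u_def v_def ..
  have s1: "1/2 \<le> s" "s \<le> 1" using s by simp_all
  obtain x1 y1 where P1: "x' = a + x1 *\<^sub>R u + y1 *\<^sub>R v" "0 \<le> x1" "x1 \<le> 1" "0 \<le> y1" "y1 \<le> 1"
    "0 \<le> s * x1 + (1-s)*y1" "s * x1 + (1-s)*y1 \<le> s" "0 \<le> (1-s)*x1 + s * y1" "(1-s)*x1 + s * y1 \<le> s"
    using hull4_coords[OF ch(1)[unfolded T'_def] pe s1] unfolding u_def v_def by metis
  obtain x2 y2 where P2: "y' = a + x2 *\<^sub>R u + y2 *\<^sub>R v" "0 \<le> x2" "x2 \<le> 1" "0 \<le> y2" "y2 \<le> 1"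
    "0 \<le> s * x2 + (1-s)*y2" "s * x2 + (1-s)*y2 \<le> s" "0 \<le> (1-s)*x2 + s * y2" "(1-s)*x2 + s * y2 \<le> s"
    using hull4_coords[OF ch(2)[unfolded T'_def] pe s1] unfolding u_def v_def by metis
  define A where "A = ca z"
  define B where "B = cb z"
  have "(t * A) *\<^sub>R u + (t * B) *\<^sub>R v = (x2 - x1) *\<^sub>R u + (y2 - y1) *\<^sub>R v"
  proof -
    have "t *\<^sub>R z = t *\<^sub>R (ca z *\<^sub>R u + cb z *\<^sub>R v)" by (rule arg_cong[OF cz])
    then have "(t * A) *\<^sub>R u + (t * B) *\<^sub>R v = t *\<^sub>R z" unfolding A_def B_def
      by (simp add: algebra_simps)
    also have "\<dots> = y' - x'" using ch(5) by simp
    also have "\<dots> = (x2 - x1) *\<^sub>R u + (y2 - y1) *\<^sub>R v" unfolding P1(1) P2(1) by (simp add: algebra_simps)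
    finally show ?thesis .
  qed
  then have tAB: "t * A = x2 - x1" "t * B = y2 - y1"
    using coord_unique[OF d0[unfolded \<Delta>_def]] by blast+
  have b1: "t * \<bar>A\<bar> \<le> 1" using tAB(1) P1 P2 ch(4) by (simp add: abs_mult[symmetric] abs_le_iff)
  have b2: "t * \<bar>B\<bar> \<le> 1" using tAB(2) P1 P2 ch(4) by (simp add: abs_mult[symmetric] abs_le_iff)
  have e3: "t * (s * A + (1-s) * B) = (s * x2 + (1-s)*y2) - (s * x1 + (1-s)*y1)"
    using tAB by algebra
  have e4: "t * ((1-s) * A + s * B) = ((1-s)*x2 + s * y2) - ((1-s)*x1 + s * y1)"
    using tAB by algebra
  have b3: "t * \<bar>s * A + (1-s) * B\<bar> \<le> s"
    using e3 P1 P2 ch(4) by (simp add: abs_mult[symmetric] abs_le_iff)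
  have b4: "t * \<bar>(1-s) * A + s * B\<bar> \<le> s"
    using e4 P1 P2 ch(4) by (simp add: abs_mult[symmetric] abs_le_iff)
  have sp: "0 < s" using s by simp
  have S1: "D * \<bar>A\<bar> < 1" by (rule strict_helper[OF Dp ch(6) b1]) simp
  have S2: "D * \<bar>B\<bar> < 1" by (rule strict_helper[OF Dp ch(6) b2]) simp
  have S3: "D * \<bar>s * A + (1-s) * B\<bar> < s" by (rule strict_helper[OF Dp ch(6) b3 sp])
  have S4: "D * \<bar>(1-s) * A + s * B\<bar> < s" by (rule strict_helper[OF Dp ch(6) b4 sp])
  have zi: "int_vec z" "z \<noteq> 0" using primitive_int[OF ch(3)] primitive_nonzero[OF ch(3)] by auto
  have zc: "z = A *\<^sub>R (b - a) + B *\<^sub>R (c - a)" using cz[of z] unfolding A_def B_def u_def v_def .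
  have L: "1 \<le> D * max \<bar>A\<bar> (max \<bar>B\<bar> \<bar>A + B\<bar>)"
    using chord_L1[OF zi zc] unfolding D_def T_def .
  have SAB: "1 \<le> D * \<bar>A + B\<bar>"
  proof -
    have "max \<bar>A\<bar> (max \<bar>B\<bar> \<bar>A + B\<bar>) = \<bar>A\<bar> \<or> max \<bar>A\<bar> (max \<bar>B\<bar> \<bar>A + B\<bar>) = \<bar>B\<bar> \<or>
          max \<bar>A\<bar> (max \<bar>B\<bar> \<bar>A + B\<bar>) = \<bar>A + B\<bar>" by (auto simp: max_def)
    then show ?thesis using L S1 S2 by auto
  qed
  define \<sigma> :: real where "\<sigma> = (if 0 < A + B then 1 else -1)"
  define z' where "z' = \<sigma> *\<^sub>R z"
  have \<sigma>: "\<bar>\<sigma>\<bar> = 1" "\<sigma> * (A + B) = \<bar>A + B\<bar>" unfolding \<sigma>_def by auto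
  have z'i: "int_vec z'" unfolding z'_def \<sigma>_def using zi(1) int_vec_minus by auto
  have caz': "ca z' = \<sigma> * A" "cb z' = \<sigma> * B" unfolding z'_def A_def B_def ca_def cb_def
    by (simp_all add: det2_simps)
  define A' where "A' = \<sigma> * A"
  define B' where "B' = \<sigma> * B"
  have T1: "1 \<le> D * (A' + B')" using SAB \<sigma>(2) unfolding A'_def B'_def by (simp add: algebra_simps)
  have T2: "D * \<bar>A'\<bar> < 1" "D * \<bar>B'\<bar> < 1" using S1 S2 \<sigma>(1) unfolding A'_def B'_def by (simp_all add: abs_mult)
  have T3: "D * \<bar>s * A' + (1-s) * B'\<bar> < s" "D * \<bar>(1-s) * A' + s * B'\<bar> < s"
  proof -
    have q1: "s * A' + (1-s) * B' = \<sigma> * (s * A + (1-s) * B)" "(1-s) * A' + s * B' = \<sigma> * ((1-s) * A + s * B)"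
      unfolding A'_def B'_def by (simp_all add: algebra_simps)
    have eqa: "\<bar>s * A' + (1-s) * B'\<bar> = \<bar>s * A + (1-s) * B\<bar>"
      unfolding q1(1) abs_mult \<sigma>(1) by simp
    have eqb: "\<bar>(1-s) * A' + s * B'\<bar> = \<bar>(1-s) * A + s * B\<bar>"
      unfolding q1(2) abs_mult \<sigma>(1) by simp
    show "D * \<bar>s * A' + (1-s) * B'\<bar> < s" unfolding eqa by (rule S3)
    show "D * \<bar>(1-s) * A' + s * B'\<bar> < s" unfolding eqb by (rule S4)
  qed
  have "D * A' \<le> D * \<bar>A'\<bar>" "D * B' \<le> D * \<bar>B'\<bar>" using Dp by (simp_all add: mult_left_mono)
  then have DA: "D * A' < 1" "D * B' < 1" using T2 by linarith+
  have Ap: "0 < A'"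
  proof -
    have "0 < D * A'" using T1 DA(2) by (simp add: algebra_simps)
    then show ?thesis using Dp by (simp add: zero_less_mult_iff)
  qed
  have Bp: "0 < B'"
  proof -
    have "0 < D * B'" using T1 DA(1) by (simp add: algebra_simps)
    then show ?thesis using Dp by (simp add: zero_less_mult_iff)
  qed
  have lt2s: "D * (A' + B') < 2 * s"
  proof -
    have "D * (s * A' + (1-s) * B') \<le> D * \<bar>s * A' + (1-s) * B'\<bar>"
      "D * ((1-s) * A' + s * B') \<le> D * \<bar>(1-s) * A' + s * B'\<bar>" using Dp by (simp_all add: mult_left_mono)
    then have "D * (s * A' + (1-s) * B') < s" "D * ((1-s) * A' + s * B') < s" using T3 by linarith+
    then have "D * (s * A' + (1-s) * B') + D * ((1-s) * A' + s * B') < 2 * s" by linarith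
    moreover have "D * (s * A' + (1-s) * B') + D * ((1-s) * A' + s * B') = D * (A' + B')"
      by (simp add: algebra_simps)
    ultimately show ?thesis by simp
  qed
  have z'F: "z' \<in> F" unfolding F_def using z'i T2 caz' unfolding A'_def B'_def by auto
  show False
  proof (cases "D * (A' + B') = 1")
    case True
    then show False using H'[OF z'i] caz' Ap Bp unfolding A'_def B'_def by auto
  next
    case False
    then have "1 < D * (A' + B')" using T1 by simp
    then have "z' \<in> G" unfolding G_def using z'F caz' Ap Bp unfolding A'_def B'_def by auto
    then have "\<delta> \<le> D * (ca z' + cb z') - 1" by (rule \<delta>le)
    then have "\<delta> \<le> D * (A' + B') - 1" using caz' unfolding A'_def B'_def by simp
    then show False using lt2s s(3) by linarith
  qed
qed

lemma int_inv_pm1: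
  assumes "(d::real) \<in> \<int>" "1 / d \<in> \<int>" "d \<noteq> 0" shows "d = 1 \<or> d = -1"
proof -
  obtain i where i: "d = of_int i" using assms(1) Ints_cases by blast
  obtain j where j: "1 / d = of_int j" using assms(2) Ints_cases by blast
  have "of_int (i * j) = (1::real)" using i j assms(3) by (simp add: field_simps)
  then have "i * j = 1" by (metis of_int_eq_1_iff)
  then have "i = 1 \<or> i = -1" unfolding zmult_eq_1_iff by auto
  then show ?thesis using i by auto
qed

lemma frac_from:
  assumes "int_vec za" "int_vec zb" "int_vec e" "e = s *\<^sub>R za + t *\<^sub>R zb" "\<not> (s \<in> \<int> \<and> t \<in> \<int>)"
  shows "\<exists>\<sigma> \<tau>. 0 \<le> \<sigma> \<and> \<sigma> < 1 \<and> 0 \<le> \<tau> \<and> \<tau> < 1 \<and> (\<sigma> \<noteq> 0 \<or> \<tau> \<noteq> 0) \<and> int_vec (\<sigma> *\<^sub>R za + \<tau> *\<^sub>R zb)"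
proof -
  have "frac s *\<^sub>R za + frac t *\<^sub>R zb = e - of_int \<lfloor>s\<rfloor> *\<^sub>R za - of_int \<lfloor>t\<rfloor> *\<^sub>R zb"
    unfolding assms(4) frac_def by (simp add: algebra_simps)
  moreover have "int_vec (e - of_int \<lfloor>s\<rfloor> *\<^sub>R za - of_int \<lfloor>t\<rfloor> *\<^sub>R zb)"
    using assms(1,2,3) by (intro int_vec_diff int_vec_scale) auto
  moreover have "frac s \<noteq> 0 \<or> frac t \<noteq> 0" using assms(5) by simp
  ultimately show ?thesis using frac_lt_1 frac_ge_0 by metis
qed

lemma frac_point:
  assumes "int_vec za" "int_vec zb" "det2 za zb \<noteq> 0" "\<not> (det2 za zb = 1 \<or> det2 za zb = -1)"
  shows "\<exists>\<sigma> \<tau>. 0 \<le> \<sigma> \<and> \<sigma> < 1 \<and> 0 \<le> \<tau> \<and> \<tau> < 1 \<and> (\<sigma> \<noteq> 0 \<or> \<tau> \<noteq> 0) \<and> int_vec (\<sigma> *\<^sub>R za + \<tau> *\<^sub>R zb)"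
proof -
  define d where "d = det2 za zb"
  have d0: "d \<noteq> 0" using assms(3) d_def by simp
  define e1 :: "real \<times> real" where "e1 = (1, 0)"
  define e2 :: "real \<times> real" where "e2 = (0, 1)"
  define s1 where "s1 = det2 e1 zb / d"
  define t1 where "t1 = det2 za e1 / d"
  define s2 where "s2 = det2 e2 zb / d"
  define t2 where "t2 = det2 za e2 / d"
  have E1: "e1 = s1 *\<^sub>R za + t1 *\<^sub>R zb" unfolding s1_def t1_def d_def by (rule coord_exists[OF assms(3)])
  have E2: "e2 = s2 *\<^sub>R za + t2 *\<^sub>R zb" unfolding s2_def t2_def d_def by (rule coord_exists[OF assms(3)])
  have ie: "int_vec e1" "int_vec e2" unfolding e1_def e2_def int_vec_def by auto
  have "\<not> (s1 \<in> \<int> \<and> t1 \<in> \<int> \<and> s2 \<in> \<int> \<and> t2 \<in> \<int>)"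
  proof
    assume all: "s1 \<in> \<int> \<and> t1 \<in> \<int> \<and> s2 \<in> \<int> \<and> t2 \<in> \<int>"
    have dd: "det2 e1 zb = snd zb" "det2 za e1 = - snd za" "det2 e2 zb = - fst zb" "det2 za e2 = fst za"
      unfolding det2_def e1_def e2_def by simp_all
    have "s1 * t2 - s2 * t1 = (fst za * snd zb - snd za * fst zb) / (d * d)"
      unfolding s1_def t1_def s2_def t2_def dd using d0 by (simp add: field_simps)
    also have "\<dots> = d / (d * d)" unfolding d_def det2_def ..
    also have "\<dots> = 1 / d" using d0 by simp
    finally have "s1 * t2 - s2 * t1 = 1 / d" .
    moreover have "s1 * t2 - s2 * t1 \<in> \<int>" using all by auto
    ultimately have "1 / d \<in> \<int>" by simp
    moreover have "d \<in> \<int>" unfolding d_def using int_vec_det2 assms(1,2) by blast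
    ultimately have "d = 1 \<or> d = -1" using int_inv_pm1 d0 by blast
    then show False using assms(4) d_def by simp
  qed
  then have "\<not> (s1 \<in> \<int> \<and> t1 \<in> \<int>) \<or> \<not> (s2 \<in> \<int> \<and> t2 \<in> \<int>)" by blast
  then show ?thesis
  proof
    assume "\<not> (s1 \<in> \<int> \<and> t1 \<in> \<int>)" then show ?thesis by (rule frac_from[OF assms(1,2) ie(1) E1])
  next
    assume "\<not> (s2 \<in> \<int> \<and> t2 \<in> \<int>)" then show ?thesis by (rule frac_from[OF assms(1,2) ie(2) E2])
  qed
qed

lemma max_small:
  assumes "0 < (D::real)" "\<bar>X\<bar> < 1" "\<bar>Y\<bar> < 1" "\<bar>X + Y\<bar> < 1"
  shows "D * max \<bar>X / D\<bar> (max \<bar>Y / D\<bar> \<bar>X / D + Y / D\<bar>) < 1"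
proof -
  have a: "\<bar>X / D\<bar> < 1 / D" "\<bar>Y / D\<bar> < 1 / D" "\<bar>X / D + Y / D\<bar> < 1 / D"
    using assms by (simp_all add: abs_divide divide_strict_right_mono add_divide_distrib[symmetric])
  then have "max \<bar>X / D\<bar> (max \<bar>Y / D\<bar> \<bar>X / D + Y / D\<bar>) < 1 / D" by simp
  then have "D * max \<bar>X / D\<bar> (max \<bar>Y / D\<bar> \<bar>X / D + Y / D\<bar>) < D * (1 / D)"
    by (rule mult_strict_left_mono[OF _ assms(1)])
  then show ?thesis using assms(1) by simp
qed

lemma complete_cfg:
  assumes "\<not> collinear {a, b, c}" "lattice_complete (convex hull {a, b, c})"
  shows "\<exists>za zb zc l D. cfg a b c za zb zc l D"
proof -
  define T where "T = convex hull {a, b, c}"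
  define D where "D = lattice_diam T"
  define u where "u = b - a"
  define v where "v = c - a"
  have e1: "convex hull {b, c, a} = T" "convex hull {c, a, b} = T" unfolding T_def by (simp_all add: insert_commute)
  have s1: "{b, c, a} = {a, b, c}" "{c, a, b} = {a, b, c}" by auto
  have nc: "\<not> collinear {b, c, a}" "\<not> collinear {c, a, b}" using assms(1) s1 by simp_all
  have cT: "lattice_complete (convex hull {b, c, a})" "lattice_complete (convex hull {c, a, b})"
    using assms(2) e1 unfolding T_def by simp_all
  obtain za la where A: "int_vec za" "0 < la" "la < 1" "a + D *\<^sub>R za = la *\<^sub>R b + (1 - la) *\<^sub>R c"
    using vertex_cevian[OF assms] unfolding D_def T_def by blast
  obtain zb lb where B: "int_vec zb" "0 < lb" "lb < 1" "b + D *\<^sub>R zb = lb *\<^sub>R c + (1 - lb) *\<^sub>R a"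
    using vertex_cevian[OF nc(1) cT(1)] unfolding D_def e1 by blast
  obtain zc lc where C: "int_vec zc" "0 < lc" "lc < 1" "c + D *\<^sub>R zc = lc *\<^sub>R a + (1 - lc) *\<^sub>R b"
    using vertex_cevian[OF nc(2) cT(2)] unfolding D_def e1 by blast
  have d0: "det2 u v \<noteq> 0" using noncollinear_det[OF assms(1)] unfolding u_def v_def .
  have Dp: "0 < D" using diam_pos[OF d0[unfolded u_def v_def]] unfolding D_def T_def .
  have Eza: "D *\<^sub>R za = la *\<^sub>R u + (1 - la) *\<^sub>R v" using A(4) unfolding u_def v_def
    by (simp add: prod_eq_iff algebra_simps, (smt (verit))?)
  have Ezb: "D *\<^sub>R zb = lb *\<^sub>R v - u" using B(4) unfolding u_def v_def
    by (simp add: prod_eq_iff algebra_simps, (smt (verit))?)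
  have Ezc: "D *\<^sub>R zc = (1 - lc) *\<^sub>R u - v" using C(4) unfolding u_def v_def
    by (simp add: prod_eq_iff algebra_simps, (smt (verit))?)
  define z where "z = za + zb + zc"
  have zi: "int_vec z" unfolding z_def using A(1) B(1) C(1) by (intro int_vec_add)
  have Dz: "D *\<^sub>R z = (la - lc) *\<^sub>R u + (lb - la) *\<^sub>R v"
    unfolding z_def scaleR_add_right Eza Ezb Ezc by (simp add: algebra_simps)
  have Ez: "z = ((la - lc) / D) *\<^sub>R u + ((lb - la) / D) *\<^sub>R v"
  proof -
    have "z = (1 / D) *\<^sub>R (D *\<^sub>R z)" using Dp by simp
    also have "\<dots> = ((la - lc) / D) *\<^sub>R u + ((lb - la) / D) *\<^sub>R v" unfolding Dz
      by (simp only: scaleR_add_right scaleR_scaleR) (simp add: divide_inverse mult.commute)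
    finally show ?thesis .
  qed
  have z0: "z = 0"
  proof (rule ccontr)
    assume "z \<noteq> 0"
    from chord_L1[OF zi this Ez[unfolded u_def v_def]]
    have "1 \<le> D * max \<bar>(la - lc) / D\<bar> (max \<bar>(lb - la) / D\<bar> \<bar>(la - lc) / D + (lb - la) / D\<bar>)"
      unfolding D_def T_def .
    moreover have "D * max \<bar>(la - lc) / D\<bar> (max \<bar>(lb - la) / D\<bar> \<bar>(la - lc) / D + (lb - la) / D\<bar>) < 1"
      by (rule max_small[OF Dp]) (use A(2,3) B(2,3) C(2,3) in auto)
    ultimately show False by linarith
  qed
  have "(la - lc) *\<^sub>R u + (lb - la) *\<^sub>R v = 0 *\<^sub>R u + 0 *\<^sub>R v" using Dz z0 by simp
  then have "la - lc = 0 \<and> lb - la = 0" by (rule coord_unique[OF d0])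
  then have eql: "lc = la" "lb = la" by simp_all
  define l where "l = la"
  have zc: "zc = - za - zb" using z0 unfolding z_def by (simp add: algebra_simps eq_neg_iff_add_eq_0)
  have Ezb': "D *\<^sub>R zb = l *\<^sub>R v - u" using Ezb eql l_def by simp
  have Eza': "D *\<^sub>R za = l *\<^sub>R u + (1 - l) *\<^sub>R v" using Eza l_def by simp
  have "D^2 * det2 za zb = det2 (D *\<^sub>R za) (D *\<^sub>R zb)" by (simp add: det2_simps power2_eq_square)
  also have "\<dots> = (l*l - l + 1) * det2 u v" unfolding Eza' Ezb' by (rule det2_exp)
  finally have Dd: "D^2 * det2 za zb = (l*l - l + 1) * det2 u v" .
  have dz: "det2 za zb \<noteq> 0" using Dd d0 kappa_pos[of l] by auto
  have det: "det2 za zb = 1 \<or> det2 za zb = -1"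
  proof (rule ccontr)
    assume nd: "\<not> (det2 za zb = 1 \<or> det2 za zb = -1)"
    obtain \<sigma> \<tau> where st: "0 \<le> \<sigma>" "\<sigma> < 1" "0 \<le> \<tau>" "\<tau> < 1" "\<sigma> \<noteq> 0 \<or> \<tau> \<noteq> 0"
      "int_vec (\<sigma> *\<^sub>R za + \<tau> *\<^sub>R zb)"
      using frac_point[OF A(1) B(1) dz nd] by blast
    define w where "w = \<sigma> *\<^sub>R za + \<tau> *\<^sub>R zb"
    have w0: "w \<noteq> 0"
    proof
      assume "w = 0"
      then have "\<sigma> *\<^sub>R za + \<tau> *\<^sub>R zb = 0 *\<^sub>R za + 0 *\<^sub>R zb" unfolding w_def by simp
      then have "\<sigma> = 0 \<and> \<tau> = 0" by (rule coord_unique[OF dz])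
      then show False using st(5) by simp
    qed
    define X where "X = \<sigma> * l - \<tau>"
    define Y where "Y = \<sigma> * (1 - l) + \<tau> * l"
    have "D *\<^sub>R w = \<sigma> *\<^sub>R (D *\<^sub>R za) + \<tau> *\<^sub>R (D *\<^sub>R zb)" unfolding w_def by (simp add: algebra_simps)
    also have "\<dots> = \<sigma> *\<^sub>R (l *\<^sub>R u + (1 - l) *\<^sub>R v) + \<tau> *\<^sub>R (l *\<^sub>R v - u)" unfolding Eza' Ezb' ..
    also have "\<dots> = X *\<^sub>R u + Y *\<^sub>R v" unfolding X_def Y_def by (simp add: prod_eq_iff algebra_simps)
    finally have Dw: "D *\<^sub>R w = X *\<^sub>R u + Y *\<^sub>R v" .
    have Ew: "w = (X / D) *\<^sub>R u + (Y / D) *\<^sub>R v"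
    proof -
      have "w = (1 / D) *\<^sub>R (D *\<^sub>R w)" using Dp by simp
      also have "\<dots> = (X / D) *\<^sub>R u + (Y / D) *\<^sub>R v" unfolding Dw
        by (simp only: scaleR_add_right scaleR_scaleR) (simp add: divide_inverse mult.commute)
      finally show ?thesis .
    qed
    have l01: "0 < l" "l < 1" using A(2,3) l_def by simp_all
    have bX: "\<bar>X\<bar> < 1"
    proof -
      have "\<sigma> * l < 1" using st(1,2) l01 by (smt (verit) mult_left_le mult_nonneg_nonneg)
      moreover have "0 \<le> \<sigma> * l" using st(1) l01 by simp
      ultimately show ?thesis unfolding X_def using st(3,4) by linarith
    qed
    have bY: "\<bar>Y\<bar> < 1"
    proof -
      have "\<sigma> * (1 - l) \<le> 1 - l" using st(1,2) l01 by (simp add: mult_left_le_one_le)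
      moreover have "\<tau> * l < l" using st(4) l01 by simp
      moreover have "0 \<le> \<sigma> * (1 - l)" "0 \<le> \<tau> * l" using st(1,3) l01 by simp_all
      ultimately show ?thesis unfolding Y_def by linarith
    qed
    have bXY: "\<bar>X + Y\<bar> < 1"
    proof -
      have "X + Y = \<sigma> - \<tau> * (1 - l)" unfolding X_def Y_def by (simp add: algebra_simps)
      moreover have "\<tau> * (1 - l) \<le> \<tau>" "0 \<le> \<tau> * (1 - l)" using st(3) l01 by (simp_all add: mult_left_le)
      ultimately show ?thesis using st(1,2,3,4) by linarith
    qed
    have wi: "int_vec w" using st(6) unfolding w_def .
    from chord_L1[OF wi w0 Ew[unfolded u_def v_def]]
    have "1 \<le> D * max \<bar>X / D\<bar> (max \<bar>Y / D\<bar> \<bar>X / D + Y / D\<bar>)" unfolding D_def T_def .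
    moreover have "D * max \<bar>X / D\<bar> (max \<bar>Y / D\<bar> \<bar>X / D + Y / D\<bar>) < 1" by (rule max_small[OF Dp bX bY bXY])
    ultimately show False by linarith
  qed
  have "cfg a b c za zb zc l D" unfolding cfg_def
  proof (intro conjI)
    show "int_vec za" "int_vec zb" "int_vec zc" by (fact A(1) B(1) C(1))+
    show "za + zb + zc = 0" using z0 z_def by simp
    show "det2 za zb = 1 \<or> det2 za zb = -1" by (rule det)
    show "0 < l" "l < 1" "0 < D" using A(2,3) Dp l_def by simp_all
    show "a + D *\<^sub>R za = l *\<^sub>R b + (1 - l) *\<^sub>R c" using A(4) l_def by simp
    show "b + D *\<^sub>R zb = l *\<^sub>R c + (1 - l) *\<^sub>R a" using B(4) eql l_def by simp
    show "c + D *\<^sub>R zc = l *\<^sub>R a + (1 - l) *\<^sub>R b" using C(4) eql l_def by simp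
  qed
  then show ?thesis by blast
qed

theorem proposition4p7:
  fixes T :: "(real \<times> real) set"
  assumes "triangle T"
  shows "(lattice_reduced T \<and> lattice_complete T) \<longleftrightarrow>
         (\<exists>x::real. 0 \<le> x \<and> x < 1 \<and> lattice_equiv (T_tri x) T)"
proof
  assume h: "lattice_reduced T \<and> lattice_complete T"
  obtain a b c where abc: "\<not> collinear {a, b, c}" "T = convex hull {a, b, c}"
    using assms unfolding triangle_def by blast
  obtain za zb zc l D where "cfg a b c za zb zc l D"
    using complete_cfg[OF abc(1)] h abc(2) by blast
  then show "\<exists>x::real. 0 \<le> x \<and> x < 1 \<and> lattice_equiv (T_tri x) T"
    using cfg_equiv abc(2) by blast
next
  assume "\<exists>x::real. 0 \<le> x \<and> x < 1 \<and> lattice_equiv (T_tri x) T"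
  then obtain x where x: "0 \<le> x" "x < 1" "lattice_equiv (T_tri x) T" by blast
  obtain a b c za zb zc l D where h: "cfg a b c za zb zc l D" "T = convex hull {a, b, c}"
    using equiv_cfg[OF x] by blast
  show "lattice_reduced T \<and> lattice_complete T"
    using cfg_reduced[OF h(1)] cfg_complete[OF h(1)] h(2) by simp
qed


end
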